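(* $\mathcal{C}_2(7,3,2)\le 396$.
   Context: $\mathcal{C}_q(n,k,r)$ is the minimum number of $k$-dimensional subspaces of $\mathbb{F}_q^n$ such that every $r$-dimensional subspace of $\mathbb{F}_q^n$ is contained in at least one of them. *)

theory Defs
  imports "HOL-Analysis.Analysis" "HOL-Library.Z2"
begin

text \<open>q-covering number C_q(n,k,r): ambient space is F^n, modelled as 'a ^ 'n for a
finite field 'a and finite index type 'n with CARD('n) = n.\<close>

definition covering_number ::
  "'a::field itself \<Rightarrow> 'n::finite itself \<Rightarrow> nat \<Rightarrow> nat \<Rightarrow> nat" where
  "covering_number _ _ k r =
     (LEAST m. \<exists>F :: ('a ^ 'n) set set.
        finite F \<and> card F = m \<and>
        (\<forall>U\<in>F. vec.subspace U \<and> vec.dim U = k) \<and>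
        (\<forall>W :: ('a ^ 'n) set. vec.subspace W \<and> vec.dim W = r \<longrightarrow> (\<exists>U\<in>F. W \<subseteq> U)))"

end

theory Submission imports Defs begin
definition tr :: "nat \<Rightarrow> nat \<times> nat \<times> nat" where "tr j = (if j < 198 then (if j < 99 then (if j < 49 then (if j < 24 then (if j < 12 then (if j < 6 then (if j < 3 then (if j < 1 then (1,2,4) else (if j < 2 then (9,34,28) else (17,66,52))) else (if j < 4 then (25,98,44) else (if j < 5 then (33,26,100) else (41,58,124)))) else (if j < 9 then (if j < 7 then (49,90,84) else (if j < 8 then (57,122,76) else (65,50,92))) else (if j < 10 then (73,18,68) else (if j < 11 then (81,114,108) else (89,82,116))))) else (if j < 18 then (if j < 15 then (if j < 13 then (97,42,60) else (if j < 14 then (105,10,36) else (113,106,12))) else (if j < 16 then (121,74,20) else (if j < 17 then (9,18,36) else (1,50,60)))) else (if j < 21 then (if j < 19 then (25,82,20) else (if j < 20 then (17,114,12) else (41,10,68))) else (if j < 22 then (33,42,92) else (if j < 23 then (57,74,116) else (49,106,108)))))) else (if j < 36 then (if j < 30 then (if j < 27 then (if j < 25 then (73,34,124) else (if j < 26 then (65,2,100) else (89,98,76))) else (if j < 28 then (81,66,84) else (if j < 29 then (105,58,28) else (97,26,4)))) else (if j < 33 then (if j < 31 then (121,122,44) else (if j < 32 then (113,90,52) else (17,34,68))) else (if j < 34 then (25,2,92) else (if j < 35 then (1,98,116) else (9,66,108))))) else (if j < 42 then (if j < 39 then (if j < 37 then (49,58,36) else (if j < 38 then (57,26,60) else (33,122,20)))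 else (if j < 40 then (41,90,12) else (if j < 41 then (81,18,28) else (89,50,4)))) else (if j < 45 then (if j < 43 then (65,82,44) else (if j < 44 then (73,114,52) else (113,10,124))) else (if j < 47 then (if j < 46 then (121,42,100) else (97,74,76)) else (if j < 48 then (105,106,84) else (25,50,100))))))) else (if j < 74 then (if j < 61 then (if j < 55 then (if j < 52 then (if j < 50 then (17,18,124) else (if j < 51 then (9,114,84) else (1,82,76))) else (if j < 53 then (57,42,4) else (if j < 54 then (49,10,28) else (41,106,52)))) else (if j < 58 then (if j < 56 then (33,74,44) else (if j < 57 then (89,2,60) else (81,34,36))) else (if j < 59 then (73,66,12) else (if j < 60 then (65,98,20) else (121,26,92))))) else (if j < 67 then (if j < 64 then (if j < 62 then (113,58,68) else (if j < 63 then (105,90,108) else (97,122,116))) else (if j < 65 then (33,66,28) else (if j < 66 then (41,98,4) else (49,2,44)))) else (if j < 70 then (if j < 68 then (57,34,52) else (if j < 69 then (1,90,124) else (9,122,100))) else (if j < 72 then (if j < 71 then (17,26,76) else (25,58,84)) else (if j < 73 then (97,114,68) else (105,82,92)))))) else (if j < 86 then (if j < 80 then (if j < 77 then (if j < 75 then (113,50,116) else (if j < 76 then (121,18,108) else (65,106,36))) else (if j < 78 then (73,74,60) else (if j < 79 then (81,42,20) else (89,10,12)))) else (if j < 83 then (if j < 81 then (41,82,60) else (if j < 82 then (33,114,36) else (57,18,12))) else (if j < 84 then (49,50,20) else (if j < 85 then (9,74,92) else (1,106,68))))) else (if j < 92 then (if j < 89 then (if j < 87 then (25,10,108) else (if j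 < 88 then (17,42,116) else (105,98,100))) else (if j < 90 then (97,66,124) else (if j < 91 then (121,34,84) else (113,2,76)))) else (if j < 95 then (if j < 93 then (73,122,4) else (if j < 94 then (65,90,28) else (89,58,52))) else (if j < 97 then (if j < 96 then (81,26,44) else (49,98,92)) else (if j < 98 then (57,66,68) else (33,34,108)))))))) else (if j < 148 then (if j < 123 then (if j < 111 then (if j < 105 then (if j < 102 then (if j < 100 then (41,2,116) else (if j < 101 then (17,122,60) else (25,90,36))) else (if j < 103 then (1,58,12) else (if j < 104 then (9,26,20) else (113,82,4)))) else (if j < 108 then (if j < 106 then (121,114,28) else (if j < 107 then (97,18,52) else (105,50,44))) else (if j < 109 then (81,74,100) else (if j < 110 then (89,106,124) else (65,10,84))))) else (if j < 117 then (if j < 114 then (if j < 112 then (73,42,76) else (if j < 113 then (57,114,124) else (49,82,100))) else (if j < 115 then (41,50,76) else (if j < 116 then (33,18,84) else (25,106,28)))) else (if j < 120 then (if j < 118 then (17,74,4) else (if j < 119 then (9,42,44) else (1,10,52))) else (if j < 121 then (121,66,36) else (if j < 122 then (113,98,60) else (105,2,20)))))) else (if j < 135 then (if j < 129 then (if j < 126 then (if j < 124 then (97,34,12) else (if j < 125 then (89,90,68) else (81,122,92))) else (if j < 127 then (73,26,116) else (if j < 128 then (65,58,108) else (65,26,52)))) else (if j < 132 then (if j < 130 then (73,58,44) else (if j < 131 then (81,90,4) else (89,122,28))) else (if j < 133 then (97,2,84) else (if j < 134 then (105,34,76) else (113,66,100))))) else (if j < 141 then (if j < 138 then (if j < 136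 then (121,98,124) else (if j < 137 then (1,42,108) else (9,10,116))) else (if j < 139 then (17,106,92) else (if j < 140 then (25,74,68) else (33,50,12)))) else (if j < 144 then (if j < 142 then (41,18,20) else (if j < 143 then (49,114,60) else (57,82,36))) else (if j < 146 then (if j < 145 then (73,10,20) else (65,42,12)) else (if j < 147 then (89,74,36) else (81,106,60))))))) else (if j < 173 then (if j < 160 then (if j < 154 then (if j < 151 then (if j < 149 then (105,18,116) else (if j < 150 then (97,50,108) else (121,82,68))) else (if j < 152 then (113,114,92) else (if j < 153 then (9,58,76) else (1,26,84)))) else (if j < 157 then (if j < 155 then (25,122,124) else (if j < 156 then (17,90,100) else (41,34,44))) else (if j < 158 then (33,2,52) else (if j < 159 then (57,98,28) else (49,66,4))))) else (if j < 166 then (if j < 163 then (if j < 161 then (81,58,116) else (if j < 162 then (89,26,108) else (65,122,68))) else (if j < 164 then (73,90,92) else (if j < 165 then (113,34,20) else (121,2,12)))) else (if j < 169 then (if j < 167 then (97,98,36) else (if j < 168 then (105,66,60) else (17,10,44))) else (if j < 171 then (if j < 170 then (25,42,52) else (1,74,28)) else (if j < 172 then (9,106,4) else (49,18,76)))))) else (if j < 185 then (if j < 179 then (if j < 176 then (if j < 174 then (57,50,84) else (if j < 175 then (33,82,124) else (41,114,100))) else (if j < 177 then (89,42,84) else (if j < 178 then (81,10,76) else (73,106,100)))) else (if j < 182 then (if j < 180 then (65,74,124) else (if j < 181 then (121,50,52) else (113,18,44))) else (if j < 183 then (105,114,4) else (if j < 184 then (97,82,28) else (25,26,12))))) else (if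 j < 191 then (if j < 188 then (if j < 186 then (17,58,20) else (if j < 187 then (9,90,60) else (1,122,36))) else (if j < 189 then (57,2,108) else (if j < 190 then (49,34,116) else (41,66,92)))) else (if j < 194 then (if j < 192 then (33,98,68) else (if j < 193 then (97,90,44) else (105,122,52))) else (if j < 196 then (if j < 195 then (113,26,28) else (121,58,4)) else (if j < 197 then (65,66,76) else (73,98,84))))))))) else (if j < 297 then (if j < 247 then (if j < 222 then (if j < 210 then (if j < 204 then (if j < 201 then (if j < 199 then (81,2,124) else (if j < 200 then (89,34,100) else (33,106,116))) else (if j < 202 then (41,74,108) else (if j < 203 then (49,42,68) else (57,10,92)))) else (if j < 207 then (if j < 205 then (1,114,20) else (if j < 206 then (9,82,12) else (17,50,36))) else (if j < 208 then (25,18,60) else (if j < 209 then (105,74,12) else (97,106,20))))) else (if j < 216 then (if j < 213 then (if j < 211 then (121,10,60) else (if j < 212 then (113,42,36) else (73,82,108))) else (if j < 214 then (65,114,116) else (if j < 215 then (89,18,92) else (81,50,68)))) else (if j < 219 then (if j < 217 then (41,122,84) else (if j < 218 then (33,90,76) else (57,58,100))) else (if j < 220 then (49,26,124) else (if j < 221 then (9,98,52) else (1,66,44)))))) else (if j < 234 then (if j < 228 then (if j < 225 then (if j < 223 then (25,34,4) else (if j < 224 then (17,2,28) else (113,122,108))) else (if j < 226 then (121,90,116) else (if j < 227 then (97,58,92) else (105,26,68)))) else (if j < 231 then (if j < 229 then (81,98,12) else (if j < 230 then (89,66,20) else (65,34,60))) else (if j < 232 then (73,2,36) else (if j < 233 then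 (49,74,52) else (57,106,44))))) else (if j < 240 then (if j < 237 then (if j < 235 then (33,10,4) else (if j < 236 then (41,42,28) else (17,82,84))) else (if j < 238 then (25,114,76) else (if j < 239 then (1,18,100) else (9,50,124)))) else (if j < 243 then (if j < 241 then (121,106,76) else (if j < 242 then (113,74,84) else (105,42,124))) else (if j < 245 then (if j < 244 then (97,10,100) else (89,114,44)) else (if j < 246 then (81,82,52) else (73,50,28))))))) else (if j < 272 then (if j < 259 then (if j < 253 then (if j < 250 then (if j < 248 then (65,18,4) else (if j < 249 then (57,90,20) else (49,122,12))) else (if j < 251 then (41,26,36) else (if j < 252 then (33,58,60) else (25,66,116)))) else (if j < 256 then (if j < 254 then (17,98,108) else (if j < 255 then (9,2,68) else (1,34,92))) else (if j < 257 then (1,32,80) else (if j < 258 then (9,32,80) else (17,32,80))))) else (if j < 265 then (if j < 262 then (if j < 260 then (25,32,80) else (if j < 261 then (1,48,88) else (9,48,88))) else (if j < 263 then (17,48,88) else (if j < 264 then (25,48,88) else (1,40,72)))) else (if j < 268 then (if j < 266 then (9,40,72) else (if j < 267 then (17,40,72) else (25,40,72))) else (if j < 270 then (if j < 269 then (1,56,64) else (9,56,64)) else (if j < 271 then (17,56,64) else (25,56,64)))))) else (if j < 284 then (if j < 278 then (if j < 275 then (if j < 273 then (1,8,16) else (if j < 274 then (33,8,16) else (65,8,16))) else (if j < 276 then (97,8,16) else (if j < 277 then (2,56,72) else (10,56,72)))) else (if j < 281 then (if j < 279 then (18,56,72) else (if j < 280 then (26,56,72) else (2,40,80))) else (if j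 < 282 then (10,40,80) else (if j < 283 then (18,40,80) else (26,40,80))))) else (if j < 290 then (if j < 287 then (if j < 285 then (2,16,32) else (if j < 286 then (10,16,32) else (66,16,32))) else (if j < 288 then (74,16,32) else (if j < 289 then (2,24,64) else (10,24,64)))) else (if j < 293 then (if j < 291 then (34,24,64) else (if j < 292 then (42,24,64) else (2,8,96))) else (if j < 295 then (if j < 294 then (18,8,96) else (34,8,96)) else (if j < 296 then (50,8,96) else (3,40,88)))))))) else (if j < 346 then (if j < 321 then (if j < 309 then (if j < 303 then (if j < 300 then (if j < 298 then (11,40,88) else (if j < 299 then (19,40,88) else (27,40,88))) else (if j < 301 then (3,24,72) else (if j < 302 then (11,24,72) else (35,24,72)))) else (if j < 306 then (if j < 304 then (43,24,72) else (if j < 305 then (3,8,48) else (19,8,48))) else (if j < 307 then (67,8,48) else (if j < 308 then (83,8,48) else (3,32,64))))) else (if j < 315 then (if j < 312 then (if j < 310 then (11,32,64) else (if j < 311 then (19,32,64) else (27,32,64))) else (if j < 313 then (3,16,104) else (if j < 314 then (11,16,104) else (35,16,104)))) else (if j < 318 then (if j < 316 then (43,16,104) else (if j < 317 then (4,48,64) else (12,48,64))) else (if j < 319 then (20,48,64) else (if j < 320 then (28,48,64) else (4,32,72)))))) else (if j < 333 then (if j < 327 then (if j < 324 then (if j < 322 then (12,32,72) else (if j < 323 then (20,32,72) else (28,32,72))) else (if j < 325 then (4,8,80) else (if j < 326 then (20,8,80) else (36,8,80)))) else (if j < 330 then (if j < 328 then (52,8,80) else (if j < 329 then (4,24,96)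 else (12,24,96))) else (if j < 331 then (36,24,96) else (if j < 332 then (44,24,96) else (4,16,40))))) else (if j < 339 then (if j < 336 then (if j < 334 then (12,16,40) else (if j < 335 then (68,16,40) else (76,16,40))) else (if j < 337 then (5,24,104) else (if j < 338 then (13,24,104) else (37,24,104)))) else (if j < 342 then (if j < 340 then (45,24,104) else (if j < 341 then (5,16,64) else (13,16,64))) else (if j < 344 then (if j < 343 then (37,16,64) else (45,16,64)) else (if j < 345 then (5,8,32) else (21,8,32))))))) else (if j < 371 then (if j < 358 then (if j < 352 then (if j < 349 then (if j < 347 then (69,8,32) else (if j < 348 then (85,8,32) else (5,56,88))) else (if j < 350 then (13,56,88) else (if j < 351 then (21,56,88) else (29,56,88)))) else (if j < 355 then (if j < 353 then (5,48,72) else (if j < 354 then (13,48,72) else (21,48,72))) else (if j < 356 then (29,48,72) else (if j < 357 then (6,56,80) else (14,56,80))))) else (if j < 364 then (if j < 361 then (if j < 359 then (22,56,80) else (if j < 360 then (30,56,80) else (6,8,64))) else (if j < 362 then (22,8,64) else (if j < 363 then (38,8,64) else (54,8,64)))) else (if j < 367 then (if j < 365 then (6,32,88) else (if j < 366 then (14,32,88) else (22,32,88))) else (if j < 369 then (if j < 368 then (30,32,88) else (6,16,96)) else (if j < 370 then (14,16,96) else (38,16,96)))))) else (if j < 383 then (if j < 377 then (if j < 374 then (if j < 372 then (46,16,96) else (if j < 373 then (6,24,40) else (14,24,40))) else (if j < 375 then (70,24,40) else (if j < 376 then (78,24,40) else (7,8,112)))) else (if j < 380 then (if j < 378 then (23,8,112)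 else (if j < 379 then (39,8,112) else (55,8,112))) else (if j < 381 then (7,16,72) else (if j < 382 then (15,16,72) else (39,16,72))))) else (if j < 389 then (if j < 386 then (if j < 384 then (47,16,72) else (if j < 385 then (7,24,32) else (15,24,32))) else (if j < 387 then (71,24,32) else (if j < 388 then (79,24,32) else (7,40,64)))) else (if j < 392 then (if j < 390 then (15,40,64) else (if j < 391 then (23,40,64) else (31,40,64))) else (if j < 394 then (if j < 393 then (7,48,80) else (15,48,80)) else (if j < 395 then (23,48,80) else (31,48,80))))))))))"
definition pl :: "nat \<Rightarrow> nat list" where "pl j = (if j < 198 then (if j < 99 then (if j < 49 then (if j < 24 then (if j < 12 then (if j < 6 then (if j < 3 then (if j < 1 then [0,1,2,4,3,5,6,7] else (if j < 2 then [0,9,34,28,43,21,62,55] else [0,17,66,52,83,37,118,103])) else (if j < 4 then [0,25,98,44,123,53,78,87] else (if j < 5 then [0,33,26,100,59,69,126,95] else [0,41,58,124,19,85,70,111]))) else (if j < 9 then (if j < 7 then [0,49,90,84,107,101,14,63] else (if j < 8 then [0,57,122,76,67,117,54,15] else [0,65,50,92,115,29,110,47])) else (if j < 10 then [0,73,18,68,91,13,86,31] else (if j < 11 then [0,81,114,108,35,61,30,79] else [0,89,82,116,11,45,38,127])))) else (if j < 18 then (if j < 15 then (if j < 13 then [0,97,42,60,75,93,22,119] else (if j < 14 then [0,105,10,36,99,77,46,71] else [0,113,106,12,27,125,102,23])) else (if j < 16 then [0,121,74,20,51,109,94,39] else (if j < 17 then [0,9,18,36,27,45,54,63] else [0,1,50,60,51,61,14,15])))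 else (if j < 21 then (if j < 19 then [0,25,82,20,75,13,70,95] else (if j < 20 then [0,17,114,12,99,29,126,111] else [0,41,10,68,35,109,78,103])) else (if j < 22 then [0,33,42,92,11,125,118,87] else (if j < 23 then [0,57,74,116,115,77,62,7] else [0,49,106,108,91,93,6,55]))))) else (if j < 36 then (if j < 30 then (if j < 27 then (if j < 25 then [0,73,34,124,107,53,94,23] else (if j < 26 then [0,65,2,100,67,37,102,39] else [0,89,98,76,59,21,46,119])) else (if j < 28 then [0,81,66,84,19,5,22,71] else (if j < 29 then [0,105,58,28,83,117,38,79] else [0,97,26,4,123,101,30,127]))) else (if j < 33 then (if j < 31 then [0,121,122,44,3,85,86,47] else (if j < 32 then [0,113,90,52,43,69,110,31] else [0,17,34,68,51,85,102,119])) else (if j < 34 then [0,25,2,92,27,69,94,71] else (if j < 35 then [0,1,98,116,99,117,22,23] else [0,9,66,108,75,101,46,39])))) else (if j < 42 then (if j < 39 then (if j < 37 then [0,49,58,36,11,21,30,47] else (if j < 38 then [0,57,26,60,35,5,38,31] else [0,33,122,20,91,53,110,79])) else (if j < 40 then [0,41,90,12,115,37,86,127] else (if j < 41 then [0,81,18,28,67,77,14,95] else [0,89,50,4,107,93,54,111]))) else (if j < 45 then (if j < 43 then [0,65,82,44,19,109,126,63] else (if j < 44 then [0,73,114,52,59,125,70,15] else [0,113,10,124,123,13,118,7])) else (if j < 47 then (if j < 46 then [0,121,42,100,83,29,78,55] else [0,97,74,76,43,45,6,103]) else (if j < 48 then [0,105,106,84,3,61,62,87] else [0,25,50,100,43,125,86,79]))))))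 else (if j < 74 then (if j < 61 then (if j < 55 then (if j < 52 then (if j < 50 then [0,17,18,124,3,109,110,127] else (if j < 51 then [0,9,114,84,123,93,38,47] else [0,1,82,76,83,77,30,31])) else (if j < 53 then [0,57,42,4,19,61,46,23] else (if j < 54 then [0,49,10,28,59,45,22,39] else [0,41,106,52,67,29,94,119]))) else (if j < 58 then (if j < 56 then [0,33,74,44,107,13,102,71] else (if j < 57 then [0,89,2,60,91,101,62,103] else [0,81,34,36,115,117,6,87])) else (if j < 59 then [0,73,66,12,11,69,78,7] else (if j < 60 then [0,65,98,20,35,85,118,55] else [0,121,26,92,99,37,70,63])))) else (if j < 67 then (if j < 64 then (if j < 62 then [0,113,58,68,75,53,126,15] else (if j < 63 then [0,105,90,108,51,5,54,95] else [0,97,122,116,27,21,14,111])) else (if j < 65 then [0,33,66,28,99,61,94,127] else (if j < 66 then [0,41,98,4,75,45,102,79] else [0,49,2,44,51,29,46,31]))) else (if j < 70 then (if j < 68 then [0,57,34,52,27,13,22,47] else (if j < 69 then [0,1,90,124,91,125,38,39] else [0,9,122,100,115,109,30,23])) else (if j < 72 then (if j < 71 then [0,17,26,76,11,93,86,71] else [0,25,58,84,35,77,110,119]) else (if j < 73 then [0,97,114,68,19,37,54,87] else [0,105,82,92,59,53,14,103]))))) else (if j < 86 then (if j < 80 then (if j < 77 then (if j < 75 then [0,113,50,116,67,5,70,55] else (if j < 76 then [0,121,18,108,107,21,126,7] else [0,65,106,36,43,101,78,15])) else (if j < 78 then [0,73,74,60,3,117,118,63] else (if j < 79 then [0,81,42,20,123,69,62,111]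 else [0,89,10,12,83,85,6,95]))) else (if j < 83 then (if j < 81 then [0,41,82,60,123,21,110,71] else (if j < 82 then [0,33,114,36,83,5,86,119] else [0,57,18,12,43,53,30,39])) else (if j < 84 then [0,49,50,20,3,37,38,23] else (if j < 85 then [0,9,74,92,67,85,22,31] else [0,1,106,68,107,69,46,47])))) else (if j < 92 then (if j < 89 then (if j < 87 then [0,25,10,108,19,117,102,127] else (if j < 88 then [0,17,42,116,59,101,94,79] else [0,105,98,100,11,13,6,111])) else (if j < 90 then [0,97,66,124,35,29,62,95] else (if j < 91 then [0,121,34,84,91,45,118,15] else [0,113,2,76,115,61,78,63]))) else (if j < 95 then (if j < 93 then [0,73,122,4,51,77,126,55] else (if j < 94 then [0,65,90,28,27,93,70,7] else [0,89,58,52,99,109,14,87])) else (if j < 97 then (if j < 96 then [0,81,26,44,75,125,54,103] else [0,49,98,92,83,109,62,15]) else (if j < 98 then [0,57,66,68,123,125,6,63] else [0,33,34,108,3,77,78,111]))))))) else (if j < 148 then (if j < 123 then (if j < 111 then (if j < 105 then (if j < 102 then (if j < 100 then [0,41,2,116,43,93,118,95] else (if j < 101 then [0,17,122,60,107,45,70,87] else [0,25,90,36,67,61,126,103])) else (if j < 103 then [0,1,58,12,59,13,54,55] else (if j < 104 then [0,9,26,20,19,29,14,7] else [0,113,82,4,35,117,86,39]))) else (if j < 108 then (if j < 106 then [0,121,114,28,11,101,110,23] else (if j < 107 then [0,97,18,52,115,85,38,71] else [0,105,50,44,91,69,30,119])) else (if j < 109 then [0,81,74,100,27,53,46,127] else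 (if j < 110 then [0,89,106,124,51,37,22,79] else [0,65,10,84,75,21,94,31])))) else (if j < 117 then (if j < 114 then (if j < 112 then [0,73,42,76,99,5,102,47] else (if j < 113 then [0,57,114,124,75,69,14,55] else [0,49,82,100,99,85,54,7])) else (if j < 115 then [0,41,50,76,27,101,126,87] else (if j < 116 then [0,33,18,84,51,117,70,103] else [0,25,106,28,115,5,118,111]))) else (if j < 120 then (if j < 118 then [0,17,74,4,91,21,78,95] else (if j < 119 then [0,9,42,44,35,37,6,15] else [0,1,10,52,11,53,62,63])) else (if j < 121 then [0,121,66,36,59,93,102,31] else (if j < 122 then [0,113,98,60,19,77,94,47] else [0,105,2,20,107,125,22,127]))))) else (if j < 135 then (if j < 129 then (if j < 126 then (if j < 124 then [0,97,34,12,67,109,46,79] else (if j < 125 then [0,89,90,68,3,29,30,71] else [0,81,122,92,43,13,38,119])) else (if j < 127 then [0,73,26,116,83,61,110,39] else (if j < 128 then [0,65,58,108,123,45,86,23] else [0,65,26,52,91,117,46,111]))) else (if j < 132 then (if j < 130 then [0,73,58,44,115,101,22,95] else (if j < 131 then [0,81,90,4,11,85,94,15] else [0,89,122,28,35,69,102,63])) else (if j < 133 then [0,97,2,84,99,53,86,55] else (if j < 134 then [0,105,34,76,75,37,110,7] else [0,113,66,100,51,21,38,87])))) else (if j < 141 then (if j < 138 then (if j < 136 then [0,121,98,124,27,5,30,103] else (if j < 137 then [0,1,42,108,43,109,70,71] else [0,9,10,116,3,125,126,119])) else (if j < 139 then [0,17,106,92,123,77,54,39] else (if j < 140 then [0,25,74,68,83,93,14,23]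 else [0,33,50,12,19,45,62,31]))) else (if j < 144 then (if j < 142 then [0,41,18,20,59,61,6,47] else (if j < 143 then [0,49,114,60,67,13,78,127] else [0,57,82,36,107,29,118,79])) else (if j < 146 then (if j < 145 then [0,73,10,20,67,93,30,87] else [0,65,42,12,107,77,38,103]) else (if j < 147 then [0,89,74,36,19,125,110,55] else [0,81,106,60,59,109,86,7])))))) else (if j < 173 then (if j < 160 then (if j < 154 then (if j < 151 then (if j < 149 then [0,105,18,116,123,29,102,15] else (if j < 150 then [0,97,50,108,83,13,94,63] else [0,121,82,68,43,61,22,111])) else (if j < 152 then [0,113,114,92,3,45,46,95] else (if j < 153 then [0,9,58,76,51,69,118,127] else [0,1,26,84,27,85,78,79]))) else (if j < 157 then (if j < 155 then [0,25,122,124,99,101,6,31] else (if j < 156 then [0,17,90,100,75,117,62,47] else [0,41,34,44,11,5,14,39])) else (if j < 158 then [0,33,2,52,35,21,54,23] else (if j < 159 then [0,57,98,28,91,37,126,71] else [0,49,66,4,115,53,70,119])))) else (if j < 166 then (if j < 163 then (if j < 161 then [0,81,58,116,107,37,78,31] else (if j < 162 then [0,89,26,108,67,53,118,47] else [0,65,122,68,59,5,62,127])) else (if j < 164 then [0,73,90,92,19,21,6,79] else (if j < 165 then [0,113,34,20,83,101,54,71] else [0,121,2,12,123,117,14,119]))) else (if j < 169 then (if j < 167 then [0,97,98,36,3,69,70,39] else (if j < 168 then [0,105,66,60,43,85,126,23] else [0,17,10,44,27,61,38,55])) else (if j < 171 then (if j < 170 then [0,25,42,52,51,45,30,7] else [0,1,74,28,75,29,86,87])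 else (if j < 172 then [0,9,106,4,99,13,110,103] else [0,49,18,76,35,125,94,111]))))) else (if j < 185 then (if j < 179 then (if j < 176 then (if j < 174 then [0,57,50,84,11,109,102,95] else (if j < 175 then [0,33,82,124,115,93,46,15] else [0,41,114,100,91,77,22,63])) else (if j < 177 then [0,89,42,84,115,13,126,39] else (if j < 178 then [0,81,10,76,91,29,70,23] else [0,73,106,100,35,45,14,71]))) else (if j < 182 then (if j < 180 then [0,65,74,124,11,61,54,119] else (if j < 181 then [0,121,50,52,75,77,6,127] else [0,113,18,44,99,93,62,79])) else (if j < 183 then [0,105,114,4,27,109,118,31] else (if j < 184 then [0,97,82,28,51,125,78,47] else [0,25,26,12,3,21,22,15])))) else (if j < 191 then (if j < 188 then (if j < 186 then [0,17,58,20,43,5,46,63] else (if j < 187 then [0,9,90,60,83,53,102,111] else [0,1,122,36,123,37,94,95])) else (if j < 189 then [0,57,2,108,59,85,110,87] else (if j < 190 then [0,49,34,116,19,69,86,103] else [0,41,66,92,107,117,30,55]))) else (if j < 194 then (if j < 192 then [0,33,98,68,67,101,38,7] else (if j < 193 then [0,97,90,44,59,77,118,23] else [0,105,122,52,19,93,78,39])) else (if j < 196 then (if j < 195 then [0,113,26,28,107,109,6,119] else [0,121,58,4,67,125,62,71]) else (if j < 197 then [0,65,66,76,3,13,14,79] else [0,73,98,84,43,29,54,127])))))))) else (if j < 297 then (if j < 247 then (if j < 222 then (if j < 210 then (if j < 204 then (if j < 201 then (if j < 199 then [0,81,2,124,83,45,126,47] else (if j < 200 then [0,89,34,100,123,61,70,31]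 else [0,33,106,116,75,85,30,63])) else (if j < 202 then [0,41,74,108,99,69,38,15] else (if j < 203 then [0,49,42,68,27,117,110,95] else [0,57,10,92,51,101,86,111]))) else (if j < 207 then (if j < 205 then [0,1,114,20,115,21,102,103] else (if j < 206 then [0,9,82,12,91,5,94,87] else [0,17,50,36,35,53,22,7])) else (if j < 208 then [0,25,18,60,11,37,46,55] else (if j < 209 then [0,105,74,12,35,101,70,47] else [0,97,106,20,11,117,126,31])))) else (if j < 216 then (if j < 213 then (if j < 211 then [0,121,10,60,115,69,54,79] else (if j < 212 then [0,113,42,36,91,85,14,127] else [0,73,82,108,27,37,62,119])) else (if j < 214 then [0,65,114,116,51,53,6,71] else (if j < 215 then [0,89,18,92,75,5,78,23] else [0,81,50,68,99,21,118,39]))) else (if j < 219 then (if j < 217 then [0,41,122,84,83,125,46,7] else (if j < 218 then [0,33,90,76,123,109,22,55] else [0,57,58,100,3,93,94,103])) else (if j < 220 then [0,49,26,124,43,77,102,87] else (if j < 221 then [0,9,98,52,107,61,86,95] else [0,1,66,44,67,45,110,111]))))) else (if j < 234 then (if j < 228 then (if j < 225 then (if j < 223 then [0,25,34,4,59,29,38,63] else (if j < 224 then [0,17,2,28,19,13,30,15] else [0,113,122,108,11,29,22,103])) else (if j < 226 then [0,121,90,116,35,13,46,87] else (if j < 227 then [0,97,58,92,91,61,102,7] else [0,105,26,68,115,45,94,55]))) else (if j < 231 then (if j < 229 then [0,81,98,12,51,93,110,63] else (if j < 230 then [0,89,66,20,27,77,86,15] else [0,65,34,60,99,125,30,95]))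 else (if j < 232 then [0,73,2,36,75,109,38,111] else (if j < 233 then [0,49,74,52,123,5,126,79] else [0,57,106,44,83,21,70,127])))) else (if j < 240 then (if j < 237 then (if j < 235 then [0,33,10,4,43,37,14,47] else (if j < 236 then [0,41,42,28,3,53,54,31] else [0,17,82,84,67,69,6,23])) else (if j < 238 then [0,25,114,76,107,85,62,39] else (if j < 239 then [0,1,18,100,19,101,118,119] else [0,9,50,124,59,117,78,71]))) else (if j < 243 then (if j < 241 then [0,121,106,76,19,53,38,95] else (if j < 242 then [0,113,74,84,59,37,30,111] else [0,105,42,124,67,21,86,63])) else (if j < 245 then (if j < 244 then [0,97,10,100,107,5,110,15] else [0,89,114,44,43,117,94,7]) else (if j < 246 then [0,81,82,52,3,101,102,55] else [0,73,50,28,123,85,46,103])))))) else (if j < 272 then (if j < 259 then (if j < 253 then (if j < 250 then (if j < 248 then [0,65,18,4,83,69,22,87] else (if j < 249 then [0,57,90,20,99,45,78,119] else [0,49,122,12,75,61,118,71])) else (if j < 251 then [0,41,26,36,51,13,62,23] else (if j < 252 then [0,33,58,60,27,29,6,39] else [0,25,66,116,91,109,54,47]))) else (if j < 256 then (if j < 254 then [0,17,98,108,115,125,14,31] else (if j < 255 then [0,9,2,68,11,77,70,79] else [0,1,34,92,35,93,126,127])) else (if j < 257 then [0,1,32,80,33,81,112,113] else (if j < 258 then [0,9,32,80,41,89,112,121] else [0,17,32,80,49,65,112,97])))) else (if j < 265 then (if j < 262 then (if j < 260 then [0,25,32,80,57,73,112,105] else (if j < 261 then [0,1,48,88,49,89,104,105]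 else [0,9,48,88,57,81,104,97])) else (if j < 263 then [0,17,48,88,33,73,104,121] else (if j < 264 then [0,25,48,88,41,65,104,113] else [0,1,40,72,41,73,96,97]))) else (if j < 268 then (if j < 266 then [0,9,40,72,33,65,96,105] else (if j < 267 then [0,17,40,72,57,89,96,113] else [0,25,40,72,49,81,96,121])) else (if j < 270 then (if j < 269 then [0,1,56,64,57,65,120,121] else [0,9,56,64,49,73,120,113]) else (if j < 271 then [0,17,56,64,41,81,120,105] else [0,25,56,64,33,89,120,97]))))) else (if j < 284 then (if j < 278 then (if j < 275 then (if j < 273 then [0,1,8,16,9,17,24,25] else (if j < 274 then [0,33,8,16,41,49,24,57] else [0,65,8,16,73,81,24,89])) else (if j < 276 then [0,97,8,16,105,113,24,121] else (if j < 277 then [0,2,56,72,58,74,112,114] else [0,10,56,72,50,66,112,122]))) else (if j < 281 then (if j < 279 then [0,18,56,72,42,90,112,98] else (if j < 280 then [0,26,56,72,34,82,112,106] else [0,2,40,80,42,82,120,122])) else (if j < 282 then [0,10,40,80,34,90,120,114] else (if j < 283 then [0,18,40,80,58,66,120,106] else [0,26,40,80,50,74,120,98])))) else (if j < 290 then (if j < 287 then (if j < 285 then [0,2,16,32,18,34,48,50] else (if j < 286 then [0,10,16,32,26,42,48,58] else [0,66,16,32,82,98,48,114])) else (if j < 288 then [0,74,16,32,90,106,48,122] else (if j < 289 then [0,2,24,64,26,66,88,90] else [0,10,24,64,18,74,88,82]))) else (if j < 293 then (if j < 291 then [0,34,24,64,58,98,88,122] else (if j < 292 then [0,42,24,64,50,106,88,114]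 else [0,2,8,96,10,98,104,106])) else (if j < 295 then (if j < 294 then [0,18,8,96,26,114,104,122] else [0,34,8,96,42,66,104,74]) else (if j < 296 then [0,50,8,96,58,82,104,90] else [0,3,40,88,43,91,112,115]))))))) else (if j < 346 then (if j < 321 then (if j < 309 then (if j < 303 then (if j < 300 then (if j < 298 then [0,11,40,88,35,83,112,123] else (if j < 299 then [0,19,40,88,59,75,112,99] else [0,27,40,88,51,67,112,107])) else (if j < 301 then [0,3,24,72,27,75,80,83] else (if j < 302 then [0,11,24,72,19,67,80,91] else [0,35,24,72,59,107,80,115]))) else (if j < 306 then (if j < 304 then [0,43,24,72,51,99,80,123] else (if j < 305 then [0,3,8,48,11,51,56,59] else [0,19,8,48,27,35,56,43])) else (if j < 307 then [0,67,8,48,75,115,56,123] else (if j < 308 then [0,83,8,48,91,99,56,107] else [0,3,32,64,35,67,96,99])))) else (if j < 315 then (if j < 312 then (if j < 310 then [0,11,32,64,43,75,96,107] else (if j < 311 then [0,19,32,64,51,83,96,115] else [0,27,32,64,59,91,96,123])) else (if j < 313 then [0,3,16,104,19,107,120,123] else (if j < 314 then [0,11,16,104,27,99,120,115] else [0,35,16,104,51,75,120,91]))) else (if j < 318 then (if j < 316 then [0,43,16,104,59,67,120,83] else (if j < 317 then [0,4,48,64,52,68,112,116] else [0,12,48,64,60,76,112,124])) else (if j < 319 then [0,20,48,64,36,84,112,100] else (if j < 320 then [0,28,48,64,44,92,112,108] else [0,4,32,72,36,76,104,108]))))) else (if j < 333 then (if j < 327 then (if j < 324 then (if j < 322 then [0,12,32,72,44,68,104,100]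 else (if j < 323 then [0,20,32,72,52,92,104,124] else [0,28,32,72,60,84,104,116])) else (if j < 325 then [0,4,8,80,12,84,88,92] else (if j < 326 then [0,20,8,80,28,68,88,76] else [0,36,8,80,44,116,88,124]))) else (if j < 330 then (if j < 328 then [0,52,8,80,60,100,88,108] else (if j < 329 then [0,4,24,96,28,100,120,124] else [0,12,24,96,20,108,120,116])) else (if j < 331 then [0,36,24,96,60,68,120,92] else (if j < 332 then [0,44,24,96,52,76,120,84] else [0,4,16,40,20,44,56,60])))) else (if j < 339 then (if j < 336 then (if j < 334 then [0,12,16,40,28,36,56,52] else (if j < 335 then [0,68,16,40,84,108,56,124] else [0,76,16,40,92,100,56,116])) else (if j < 337 then [0,5,24,104,29,109,112,117] else (if j < 338 then [0,13,24,104,21,101,112,125] else [0,37,24,104,61,77,112,85]))) else (if j < 342 then (if j < 340 then [0,45,24,104,53,69,112,93] else (if j < 341 then [0,5,16,64,21,69,80,85] else [0,13,16,64,29,77,80,93])) else (if j < 344 then (if j < 343 then [0,37,16,64,53,101,80,117] else [0,45,16,64,61,109,80,125]) else (if j < 345 then [0,5,8,32,13,37,40,45] else [0,21,8,32,29,53,40,61])))))) else (if j < 371 then (if j < 358 then (if j < 352 then (if j < 349 then (if j < 347 then [0,69,8,32,77,101,40,109] else (if j < 348 then [0,85,8,32,93,117,40,125] else [0,5,56,88,61,93,96,101])) else (if j < 350 then [0,13,56,88,53,85,96,109] else (if j < 351 then [0,21,56,88,45,77,96,117] else [0,29,56,88,37,69,96,125]))) else (if j < 355 then (if j < 353 then [0,5,48,72,53,77,120,125]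 else (if j < 354 then [0,13,48,72,61,69,120,117] else [0,21,48,72,37,93,120,109])) else (if j < 356 then [0,29,48,72,45,85,120,101] else (if j < 357 then [0,6,56,80,62,86,104,110] else [0,14,56,80,54,94,104,102])))) else (if j < 364 then (if j < 361 then (if j < 359 then [0,22,56,80,46,70,104,126] else (if j < 360 then [0,30,56,80,38,78,104,118] else [0,6,8,64,14,70,72,78])) else (if j < 362 then [0,22,8,64,30,86,72,94] else (if j < 363 then [0,38,8,64,46,102,72,110] else [0,54,8,64,62,118,72,126]))) else (if j < 367 then (if j < 365 then [0,6,32,88,38,94,120,126] else (if j < 366 then [0,14,32,88,46,86,120,118] else [0,22,32,88,54,78,120,110])) else (if j < 369 then (if j < 368 then [0,30,32,88,62,70,120,102] else [0,6,16,96,22,102,112,118]) else (if j < 370 then [0,14,16,96,30,110,112,126] else [0,38,16,96,54,70,112,86]))))) else (if j < 383 then (if j < 377 then (if j < 374 then (if j < 372 then [0,46,16,96,62,78,112,94] else (if j < 373 then [0,6,24,40,30,46,48,54] else [0,14,24,40,22,38,48,62])) else (if j < 375 then [0,70,24,40,94,110,48,118] else (if j < 376 then [0,78,24,40,86,102,48,126] else [0,7,8,112,15,119,120,127]))) else (if j < 380 then (if j < 378 then [0,23,8,112,31,103,120,111] else (if j < 379 then [0,39,8,112,47,87,120,95] else [0,55,8,112,63,71,120,79])) else (if j < 381 then [0,7,16,72,23,79,88,95] else (if j < 382 then [0,15,16,72,31,71,88,87] else [0,39,16,72,55,111,88,127])))) else (if j < 389 then (if j < 386 then (if j < 384 then [0,47,16,72,63,103,88,119]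 else (if j < 385 then [0,7,24,32,31,39,56,63] else [0,15,24,32,23,47,56,55])) else (if j < 387 then [0,71,24,32,95,103,56,127] else (if j < 388 then [0,79,24,32,87,111,56,119] else [0,7,40,64,47,71,104,111]))) else (if j < 392 then (if j < 390 then [0,15,40,64,39,79,104,103] else (if j < 391 then [0,23,40,64,63,87,104,127] else [0,31,40,64,55,95,104,119])) else (if j < 394 then (if j < 393 then [0,7,48,80,55,87,96,103] else [0,15,48,80,63,95,96,111]) else (if j < 395 then [0,23,48,80,39,71,96,119] else [0,31,48,80,47,79,96,127])))))))))"
fun blk :: "nat \<times> nat \<times> nat \<Rightarrow> nat list" where
 "blk (a,b,c) = [0,a,b,c,xor a b, xor a c, xor b c, xor (xor a b) c]"
definition okp :: "nat \<Rightarrow> bool" where "okp j \<longleftrightarrow> pl j = blk (tr j) \<and> distinct (pl j) \<and> list_all (\<lambda>p. p < 128) (pl j)"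
definition cw :: "nat \<Rightarrow> nat \<Rightarrow> nat \<Rightarrow> bool" where "cw m n j \<longleftrightarrow> j < 396 \<and> m \<in> set (pl j) \<and> n \<in> set (pl j)"
definition cf :: "nat \<Rightarrow> bool" where "cf m \<longleftrightarrow> (\<forall>n. m < n \<and> n < 128 \<longrightarrow> (\<exists>j. cw m n j))"

lemma okj: "list_all okp (0 # 1 # [2..<396])"
  apply (simp add: upt_rec)
  apply (simp add: okp_def pl_def tr_def numeral_3_eq_3[symmetric])
  done
lemma w1: "list_all2 (cw 1) [Suc 1..<128] [0,0,0,0,0,0,272,272,119,119,102,102,17,17,272,272,238,238,204,204,34,34,272,272,153,153,170,170,51,51,256,256,255,255,187,187,68,68,264,264,136,136,221,221,85,85,260,260,17,17,119,119,102,102,268,268,102,102,17,17,119,119,268,268,221,221,85,85,136,136,264,264,170,170,51,51,153,153,256,256,51,51,153,153,170,170,260,260,68,68,255,255,187,187,264,264,34,34,238,238,204,204,260,260,85,85,136,136,221,221,256,256,204,204,34,34,238,238,268,268,187,187,68,68,255,255]"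
  apply (simp add: upt_rec)
  apply (simp add: cw_def pl_def)
  done
lemma w2: "list_all2 (cw 2) [Suc 2..<128] [0,0,0,0,0,292,254,292,254,165,223,165,223,284,223,284,223,122,157,122,157,288,33,288,33,223,66,223,66,284,157,284,157,231,25,231,25,280,99,280,99,66,198,66,198,284,66,284,66,157,132,157,132,276,188,276,188,56,91,56,91,288,25,288,25,254,33,254,33,276,231,276,231,91,254,91,254,280,198,280,198,132,188,132,188,288,56,288,56,33,99,33,99,292,132,292,132,25,56,25,56,292,122,292,122,188,231,188,231,276,91,276,91,99,165,99,165,280,165,280,165,198,122,198,122]"
  apply (simp add: upt_rec)
  apply (simp add: cw_def pl_def)
  done
lemma w3: "list_all2 (cw 3) [Suc 3..<128] [0,0,0,0,304,137,137,304,184,196,196,184,312,49,49,312,83,184,184,83,300,184,184,300,235,124,124,235,308,98,98,308,166,83,83,166,296,235,235,296,30,151,151,30,304,83,83,304,245,235,235,245,304,218,218,304,77,47,47,77,308,196,196,308,124,166,166,124,300,77,77,300,196,98,98,196,300,245,245,300,47,30,30,47,296,124,124,296,151,218,218,151,308,166,166,308,218,245,245,218,312,47,47,312,98,49,49,98,296,151,151,296,137,77,77,137,312,30,30,312,49,137,137,49]"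
  apply (simp add: upt_rec)
  apply (simp add: cw_def pl_def)
  done
lemma w4: "list_all2 (cw 4) [Suc 4..<128] [0,0,0,324,171,234,130,324,171,234,130,332,117,247,52,332,117,247,52,328,222,29,182,328,222,29,182,320,234,222,104,320,234,222,104,332,65,52,234,332,65,52,234,316,159,41,92,316,159,41,92,332,52,195,222,332,52,195,222,316,247,159,195,316,247,159,195,320,92,117,65,320,92,117,65,324,130,104,247,324,130,104,247,324,41,130,117,324,41,130,117,328,29,65,171,328,29,65,171,320,182,171,41,320,182,171,41,316,104,182,159,316,104,182,159,328,195,92,29,328,195,92,29]"
  apply (simp add: upt_rec)
  apply (simp add: cw_def pl_def)
  done
lemma w5: "list_all2 (cw 5) [Suc 5..<128] [0,0,344,205,243,156,205,344,156,243,340,185,214,27,185,340,27,214,336,116,37,135,116,336,135,37,344,81,156,37,81,344,37,156,344,156,111,185,156,344,185,111,352,232,74,62,232,352,62,74,348,37,185,162,37,348,162,185,340,162,27,74,162,340,74,27,352,111,232,214,111,352,214,232,340,27,205,81,27,340,81,205,348,214,62,205,214,348,205,62,348,243,135,111,243,348,111,135,336,62,116,243,62,336,243,116,336,74,81,116,74,336,116,81,352,135,162,232,135,352,232,162]"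
  apply (simp add: upt_rec)
  apply (simp add: cw_def pl_def)
  done
lemma w6: "list_all2 (cw 6) [Suc 6..<128] [0,360,118,79,88,79,88,360,118,368,236,141,163,141,163,368,236,372,154,194,251,194,251,372,154,364,251,57,118,57,118,364,251,372,141,118,46,118,46,372,141,372,23,180,213,180,213,372,23,356,97,251,141,251,141,356,97,360,213,97,236,97,236,360,213,360,163,46,180,46,180,360,163,356,57,236,79,236,79,356,57,364,79,163,23,163,23,364,79,368,46,88,154,88,154,368,46,356,88,23,194,23,194,356,88,368,194,213,57,213,57,368,194,364,180,154,97,154,97,364,180]"
  apply (simp add: upt_rec)
  apply (simp add: cw_def pl_def)
  done
lemma w7: "list_all2 (cw 7) [Suc 7..<128] [376,103,44,58,58,44,103,376,380,206,75,103,103,75,206,380,384,169,103,93,93,103,169,384,384,191,133,206,206,133,191,384,388,216,169,244,244,169,216,388,392,113,206,169,169,206,113,392,384,22,226,147,147,226,22,384,388,93,58,191,191,58,93,388,380,58,22,133,133,22,58,380,392,147,113,216,216,113,147,392,380,244,93,226,226,93,244,380,392,226,191,113,113,191,226,392,388,133,147,75,75,147,133,388,376,44,244,22,22,244,44,376,376,75,216,44,44,216,75,376]"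
  apply (simp add: upt_rec)
  apply (simp add: cw_def pl_def)
  done
lemma w8: "list_all2 (cw 8) [Suc 8..<128] [272,292,304,324,344,360,376,272,272,293,305,325,345,361,377,272,272,293,305,325,345,361,377,344,273,294,305,326,344,362,378,344,273,294,305,326,344,362,378,304,273,295,304,327,345,363,379,304,273,295,304,327,345,363,379,360,274,294,306,325,346,360,379,360,274,294,306,325,346,360,379,324,274,295,307,324,347,361,378,324,274,295,307,324,347,361,378,292,275,292,307,327,346,362,377,292,275,292,307,327,346,362,377,376,275,293,306,326,347,363,376,376,275,293,306,326,347,363,376]"
  apply (simp add: upt_rec)
  apply (simp add: cw_def pl_def)
  done
lemma w9: "list_all2 (cw 9) [Suc 9..<128] [137,254,205,171,103,118,272,272,16,103,103,1,84,69,272,272,103,16,1,103,69,84,257,265,1,118,16,118,50,35,265,257,118,1,118,16,35,50,261,269,239,152,220,186,16,1,269,261,152,239,186,220,1,16,269,265,35,84,254,152,254,239,265,269,84,35,152,254,239,254,257,261,205,186,50,84,220,205,261,257,186,205,84,50,205,220,265,261,220,171,69,35,186,171,261,265,171,220,35,69,171,186,257,269,50,69,137,239,152,137,269,257,69,50,239,137,137,152]"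
  apply (simp add: upt_rec)
  apply (simp add: cw_def pl_def)
  done
lemma w10: "list_all2 (cw 10) [Suc 10..<128] [119,79,44,234,243,285,168,289,86,144,110,53,177,289,86,285,168,53,177,144,110,285,234,281,20,13,234,168,53,281,20,285,234,168,53,13,234,285,53,277,203,119,119,210,168,277,203,285,53,210,168,119,119,289,110,277,144,20,210,177,13,277,144,289,110,177,13,20,210,281,177,289,79,110,79,203,144,289,79,281,177,203,144,110,79,292,243,292,13,243,203,86,20,292,13,292,243,86,20,243,203,277,44,281,210,137,86,44,137,281,210,277,44,44,137,137,86]"
  apply (simp add: upt_rec)
  apply (simp add: cw_def pl_def)
  done
lemma w11: "list_all2 (cw 11) [Suc 11..<128] [58,88,156,130,313,70,207,301,209,36,224,105,301,207,70,313,105,224,36,209,309,21,156,297,36,207,11,156,297,156,21,309,156,11,207,36,304,36,173,304,119,119,179,207,304,173,36,304,207,179,119,119,309,179,58,301,254,58,254,70,301,58,179,309,70,254,58,254,301,130,11,297,173,130,70,21,297,11,130,301,21,70,130,173,309,209,88,313,88,105,173,224,313,88,209,309,224,173,105,88,297,224,105,313,11,209,21,179,313,105,224,297,179,21,209,11]"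
  apply (simp add: upt_rec)
  apply (simp add: cw_def pl_def)
  done
lemma w12: "list_all2 (cw 12) [Suc 12..<128] [102,165,184,333,19,82,140,329,184,184,14,329,184,184,14,333,19,82,140,321,140,123,208,333,39,145,82,333,39,145,82,321,140,123,208,317,249,140,228,333,82,102,102,333,82,102,102,317,249,140,228,317,145,58,123,321,58,208,249,321,58,208,249,317,145,58,123,324,228,205,79,324,79,39,205,324,79,39,205,324,228,205,79,329,123,228,19,321,208,14,145,321,208,14,145,329,123,228,19,317,14,19,39,329,165,249,165,329,165,249,165,317,14,19,39]"
  apply (simp add: upt_rec)
  apply (simp add: cw_def pl_def)
  done
lemma w13: "list_all2 (cw 13) [Suc 13..<128] [196,223,341,223,9,223,18,337,67,250,337,18,250,67,223,341,223,9,344,55,67,225,250,344,125,176,344,250,176,125,55,344,225,67,353,142,149,250,67,349,102,102,349,67,102,102,142,353,250,149,341,196,196,142,9,353,18,55,353,9,55,18,196,341,142,196,341,125,18,149,176,349,9,225,349,176,225,9,125,341,149,18,349,149,88,171,88,337,55,171,337,88,171,55,149,349,171,88,337,44,142,176,225,353,44,125,353,225,125,44,44,337,176,142]"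
  apply (simp add: upt_rec)
  apply (simp add: cw_def pl_def)
  done
lemma w14: "list_all2 (cw 14) [Suc 14..<128] [17,369,253,40,103,103,63,373,139,373,139,103,63,40,103,369,253,365,234,156,178,211,234,373,156,373,156,211,234,156,178,365,234,373,6,17,17,94,73,357,112,357,112,94,73,17,17,373,6,360,196,196,40,139,112,360,178,360,178,139,112,196,40,360,196,357,40,73,139,6,211,365,94,365,94,6,211,73,139,357,40,369,63,253,94,178,6,357,73,357,73,178,6,253,94,369,63,369,211,112,253,63,165,365,165,365,165,63,165,112,253,369,211]"
  apply (simp add: upt_rec)
  apply (simp add: cw_def pl_def)
  done
lemma w15: "list_all2 (cw 15) [Suc 15..<128] [381,223,148,223,229,184,184,385,385,184,184,229,223,148,223,381,385,174,90,118,76,118,201,389,389,201,118,76,118,90,174,385,393,96,17,17,43,61,7,385,385,7,61,43,17,17,96,393,389,76,229,7,61,201,43,381,381,43,201,61,7,229,76,389,393,130,174,96,90,130,229,381,381,229,130,90,96,174,130,393,393,243,96,201,243,76,148,389,389,148,76,243,201,96,243,393,376,61,43,174,148,7,90,376,376,90,7,148,174,43,61,376]"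
  apply (simp add: upt_rec)
  apply (simp add: cw_def pl_def)
  done
lemma w16: "list_all2 (cw 16) [Suc 16..<128] [272,284,312,332,340,368,380,272,272,285,313,333,341,369,381,284,273,284,314,333,342,370,382,332,273,285,315,332,343,371,383,284,273,284,314,333,342,370,382,332,273,285,315,332,343,371,383,340,274,286,315,334,340,370,381,380,274,287,314,335,341,371,380,340,274,286,315,334,340,370,381,380,274,287,314,335,341,371,380,368,275,286,313,335,342,368,383,312,275,287,312,334,343,369,382,368,275,286,313,335,342,368,383,312,275,287,312,334,343,369,382]"
  apply (simp add: upt_rec)
  apply (simp add: cw_def pl_def)
  done
lemma w17: "list_all2 (cw 17) [Suc 17..<128] [49,223,185,117,206,236,272,272,70,168,223,19,223,253,258,262,32,206,206,2,168,138,266,270,87,185,168,100,185,155,262,258,206,32,2,206,138,168,270,266,185,87,100,168,155,185,270,258,2,236,32,236,100,70,266,262,117,155,70,138,117,87,258,270,236,2,236,32,70,100,262,266,155,117,138,70,87,117,266,258,253,19,155,87,32,2,262,270,138,100,253,49,49,19,258,266,19,253,87,155,2,32,270,262,100,138,49,253,19,49]"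
  apply (simp add: upt_rec)
  apply (simp add: cw_def pl_def)
  done
lemma w18: "list_all2 (cw 18) [Suc 18..<128] [238,141,75,247,214,289,207,293,16,40,148,82,9,284,115,284,172,16,207,106,82,282,141,278,82,181,16,207,141,284,172,284,115,106,82,16,207,278,82,282,141,207,141,181,16,289,247,282,40,9,247,115,106,278,9,289,214,172,40,214,181,282,40,289,247,115,106,9,247,289,214,278,9,214,181,172,40,293,106,278,181,238,238,148,115,293,148,282,75,75,49,49,172,278,181,293,106,148,115,238,238,282,75,293,148,49,172,75,49]"
  apply (simp add: upt_rec)
  apply (simp add: cw_def pl_def)
  done
lemma w19: "list_all2 (cw 19) [Suc 19..<128] [103,163,27,52,301,86,103,305,223,103,223,140,310,140,189,305,146,72,240,193,298,5,52,305,42,140,52,121,305,189,140,310,193,240,72,146,305,52,5,298,121,52,140,42,310,42,27,301,72,189,5,27,301,163,146,298,240,121,193,163,301,27,42,310,27,5,189,72,298,146,163,301,163,193,121,240,310,72,121,298,238,238,86,189,312,193,240,312,86,42,146,5,298,121,72,310,189,86,238,238,312,240,193,312,5,146,42,86]"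
  apply (simp add: upt_rec)
  apply (simp add: cw_def pl_def)
  done
lemma w20: "list_all2 (cw 20) [Suc 20..<128] [204,122,83,329,18,103,229,325,103,144,209,322,38,164,59,318,83,83,15,332,141,78,185,332,248,185,141,318,83,83,15,322,38,164,59,332,248,185,141,332,141,78,185,318,59,229,144,325,78,18,164,322,144,15,18,325,229,248,38,325,78,18,164,318,59,229,144,325,229,248,38,322,144,15,18,329,209,59,248,318,164,204,204,322,122,209,122,329,15,38,78,318,164,204,204,329,209,59,248,329,15,38,78,322,122,209,122]"
  apply (simp add: upt_rec)
  apply (simp add: cw_def pl_def)
  done
lemma w21: "list_all2 (cw 21) [Suc 21..<128] [184,157,337,184,184,63,1,345,36,110,345,157,1,157,36,354,134,215,345,80,242,1,233,350,26,36,354,36,215,134,157,345,157,1,350,233,36,26,80,345,1,242,340,110,134,242,215,340,233,80,354,163,117,110,26,350,117,163,340,215,80,233,110,340,242,134,350,26,163,117,163,354,110,117,350,63,26,215,134,337,204,204,337,242,233,75,75,354,80,63,337,134,204,204,63,350,215,26,354,75,63,80,242,337,75,233]"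
  apply (simp add: upt_rec)
  apply (simp add: cw_def pl_def)
  done
lemma w22: "list_all2 (cw 22) [Suc 22..<128] [34,373,184,184,67,53,224,361,84,366,217,67,206,206,109,373,53,373,175,12,150,129,53,358,67,373,53,206,109,67,206,366,217,358,67,129,53,12,150,373,175,361,247,27,84,150,247,358,27,361,129,84,12,217,175,366,109,358,27,150,247,27,84,361,247,366,109,217,175,84,12,361,129,368,12,34,34,175,129,368,224,358,122,109,122,224,217,366,150,368,224,175,129,34,34,368,12,366,150,224,217,109,122,358,122]"
  apply (simp add: upt_rec)
  apply (simp add: cw_def pl_def)
  done
lemma w23: "list_all2 (cw 23) [Suc 23..<128] [385,139,250,14,105,177,69,377,385,157,24,157,250,83,83,394,390,250,52,167,192,127,52,385,394,83,83,250,157,24,157,385,385,52,127,192,167,52,250,390,390,127,167,236,139,236,177,394,380,24,139,214,177,192,214,380,394,177,236,139,236,167,127,390,380,214,192,177,214,139,24,380,394,192,34,34,69,105,14,377,390,167,14,24,127,69,105,377,377,14,105,69,34,34,192,394,377,105,69,127,24,14,167,390]"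
  apply (simp add: upt_rec)
  apply (simp add: cw_def pl_def)
  done
lemma w24: "list_all2 (cw 24) [Suc 24..<128] [272,288,300,328,336,372,384,384,273,290,302,330,338,373,384,372,273,291,303,331,339,372,385,372,273,291,303,331,339,372,385,384,273,290,302,330,338,373,384,288,274,288,301,330,339,374,386,300,274,289,300,331,338,375,387,300,274,289,300,331,338,375,387,288,274,288,301,330,339,374,386,328,275,290,303,328,337,375,386,336,275,291,302,329,336,374,387,336,275,291,302,329,336,374,387,328,275,290,303,328,337,375,386]"
  apply (simp add: upt_rec)
  apply (simp add: cw_def pl_def)
  done
lemma w25: "list_all2 (cw 25) [Suc 25..<128] [184,33,116,222,169,154,259,271,222,71,101,207,222,237,267,263,169,48,3,169,207,252,263,267,48,169,169,3,252,207,271,259,71,222,207,101,237,222,271,263,252,101,139,33,18,33,267,259,139,18,237,71,3,48,259,267,18,139,71,237,48,3,263,271,101,252,33,139,33,18,267,271,3,154,48,154,86,101,263,259,116,237,86,252,71,116,259,263,237,116,252,86,116,71,271,267,154,3,154,48,101,86]"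
  apply (simp add: upt_rec)
  apply (simp add: cw_def pl_def)
  done
lemma w26: "list_all2 (cw 26) [Suc 26..<128] [153,194,103,29,37,285,4,279,37,250,60,37,126,283,250,285,219,95,227,128,161,285,219,283,250,128,161,95,227,279,37,285,4,37,126,250,60,288,128,288,161,227,4,60,70,279,126,283,95,70,219,153,153,283,95,279,126,153,153,70,219,288,161,288,128,60,70,227,4,293,29,283,60,4,29,219,95,293,227,279,194,161,194,126,128,279,194,293,227,126,128,161,194,283,60,293,29,219,95,4,29]"
  apply (simp add: upt_rec)
  apply (simp add: cw_def pl_def)
  done
lemma w27: "list_all2 (cw 27) [Suc 27..<128] [93,251,135,182,311,251,67,305,16,212,168,251,299,114,202,305,168,16,108,67,305,202,114,299,67,108,16,168,305,67,251,311,251,168,212,16,311,93,229,299,202,33,93,33,300,212,108,300,114,229,153,153,300,108,212,300,153,153,229,114,299,229,93,311,33,93,33,202,311,63,135,313,108,114,14,135,313,182,14,299,212,182,202,63,299,14,182,313,63,202,182,212,313,135,63,311,135,14,114,108]"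
  apply (simp add: upt_rec)
  apply (simp add: cw_def pl_def)
  done
lemma w28: "list_all2 (cw 28) [Suc 28..<128] [170,223,235,323,64,1,131,333,158,28,53,333,235,235,1,319,53,246,183,319,53,246,183,333,235,235,1,333,158,28,53,323,64,1,131,319,93,64,40,325,131,93,158,323,246,170,170,325,40,183,28,325,40,183,28,323,246,170,170,325,131,93,158,319,93,64,40,328,183,158,64,328,105,131,246,323,28,116,194,319,194,105,116,319,194,105,116,323,28,116,194,328,105,131,246,328,183,158,64]"
  apply (simp add: upt_rec)
  apply (simp add: cw_def pl_def)
  done
lemma w29: "list_all2 (cw 29) [Suc 29..<128] [124,66,345,251,222,89,143,351,222,251,345,54,45,197,66,355,66,8,355,66,8,66,54,345,197,45,351,143,251,222,251,345,89,222,341,8,89,54,124,351,177,124,355,197,170,170,177,341,45,143,341,177,143,45,197,355,170,170,351,124,124,177,8,341,54,89,351,89,197,19,45,355,148,224,336,148,54,143,224,336,8,19,336,224,19,8,148,336,143,54,355,45,224,148,89,351,19,197]"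
  apply (simp add: upt_rec)
  apply (simp add: cw_def pl_def)
  done
lemma w30: "list_all2 (cw 30) [Suc 30..<128] [51,367,200,230,10,36,241,359,82,372,190,169,82,107,169,372,36,372,36,107,169,169,82,372,190,359,82,36,241,230,10,367,200,361,230,190,144,124,107,367,124,361,144,241,200,51,51,359,10,359,10,51,51,241,200,361,144,367,124,124,107,190,144,361,230,369,29,135,230,69,29,367,135,359,107,200,190,10,69,369,241,369,241,10,69,200,190,359,107,367,135,69,29,135,230,369,29]"
  apply (simp add: upt_rec)
  apply (simp add: cw_def pl_def)
  done
lemma w31: "list_all2 (cw 31) [Suc 31..<128] [384,140,199,37,120,160,37,384,391,235,235,31,66,140,66,395,395,66,140,66,31,235,235,391,384,37,160,120,37,199,140,384,391,110,120,84,9,31,199,381,381,9,84,110,51,51,160,395,395,160,51,51,110,84,9,381,381,199,31,9,84,120,110,391,395,209,253,154,199,154,120,377,391,182,209,160,253,182,31,377,377,31,182,253,160,209,182,391,377,120,154,199,154,253,209,395]"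
  apply (simp add: upt_rec)
  apply (simp add: cw_def pl_def)
  done
lemma w32: "list_all2 (cw 32) [Suc 32..<128] [256,284,308,320,344,364,384,344,257,285,309,321,344,365,385,284,258,284,310,322,345,366,385,384,259,285,311,323,345,367,384,308,258,286,308,321,346,367,386,320,259,287,309,320,346,366,387,256,256,286,310,323,347,365,387,364,257,287,311,322,347,364,386,308,258,286,308,321,346,367,386,320,259,287,309,320,346,366,387,256,256,286,310,323,347,365,387,364,257,287,311,322,347,364,386]"
  apply (simp add: upt_rec)
  apply (simp add: cw_def pl_def)
  done
lemma w33: "list_all2 (cw 33) [Suc 33..<128] [98,157,81,234,191,251,265,273,21,234,55,140,174,234,262,273,140,115,157,38,157,217,271,273,251,4,251,64,140,200,271,265,64,191,191,4,115,55,265,262,55,200,217,98,98,38,256,256,174,81,115,200,81,21,262,271,217,38,21,174,64,4,265,271,191,64,4,191,55,115,262,265,200,55,98,217,38,98,256,256,81,174,200,115,21,81,271,262,38,217,174,21,4,64]"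
  apply (simp add: upt_rec)
  apply (simp add: cw_def pl_def)
  done
lemma w34: "list_all2 (cw 34) [Suc 34..<128] [255,57,133,222,156,281,156,294,1,156,90,123,67,284,189,284,32,67,24,164,1,279,67,290,222,230,199,1,222,290,230,294,123,32,189,199,164,279,24,294,133,133,98,98,123,281,57,279,164,90,32,189,57,290,199,281,90,255,255,24,230,294,123,290,230,199,164,32,189,294,133,279,24,98,123,133,98,279,164,281,57,189,57,90,32,281,90,290,199,24,230,255,255]"
  apply (simp add: upt_rec)
  apply (simp add: cw_def pl_def)
  done
lemma w35: "list_all2 (cw 35) [Suc 35..<128] [206,118,37,104,297,20,118,305,118,178,225,208,305,172,206,314,157,206,157,59,305,37,71,302,37,10,89,131,308,59,89,308,20,131,208,178,302,178,208,314,172,71,20,10,302,10,104,297,71,59,104,225,297,131,225,314,255,255,172,89,308,89,59,308,178,208,131,20,314,208,178,302,10,20,71,172,297,104,10,302,225,104,59,71,314,225,131,297,89,172,255,255]"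
  apply (simp add: upt_rec)
  apply (simp add: cw_def pl_def)
  done
lemma w36: "list_all2 (cw 36) [Suc 36..<128] [187,231,166,333,250,211,76,326,16,13,36,318,36,206,250,333,206,16,146,333,143,36,120,330,101,250,16,318,76,120,101,330,166,166,13,320,231,146,231,320,13,76,143,326,57,143,81,318,211,81,57,326,146,101,211,330,120,187,187,330,166,166,13,318,76,120,101,320,13,76,143,320,231,146,231,318,211,81,57,326,57,143,81,330,120,187,187,326,146,101,211]"
  apply (simp add: upt_rec)
  apply (simp add: cw_def pl_def)
  done
lemma w37: "list_all2 (cw 37) [Suc 37..<128] [83,25,344,39,118,234,118,344,207,234,354,83,83,109,2,342,72,207,351,158,160,241,207,338,212,60,342,25,2,25,72,351,60,158,354,212,241,133,133,338,160,109,342,160,212,2,241,338,39,72,351,109,39,158,60,354,187,187,351,72,158,60,25,342,25,2,338,133,109,160,212,354,133,241,338,241,72,39,160,342,2,212,354,60,187,187,109,351,158,39]"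
  apply (simp add: upt_rec)
  apply (simp add: cw_def pl_def)
  done
lemma w38: "list_all2 (cw 38) [Suc 38..<128] [68,373,201,145,125,168,11,362,50,373,83,83,134,106,240,370,168,359,37,28,222,37,168,373,222,362,145,134,191,191,201,370,106,362,231,201,231,240,145,359,28,359,125,11,28,50,106,370,134,364,11,68,68,125,50,364,240,370,106,191,201,134,191,362,145,359,28,240,145,201,231,362,231,370,134,50,106,11,28,359,125,364,240,125,50,68,68,364,11]"
  apply (simp add: upt_rec)
  apply (simp add: cw_def pl_def)
  done
lemma w39: "list_all2 (cw 39) [Suc 39..<128] [389,156,176,82,156,53,35,378,394,53,215,15,193,82,138,382,384,82,251,53,251,126,237,384,389,25,35,25,215,166,166,394,382,126,15,35,237,138,193,389,394,215,104,126,176,237,104,378,382,176,68,68,138,193,15,378,394,166,166,215,25,35,25,389,389,193,138,237,35,15,126,382,378,104,237,176,126,104,215,394,378,15,193,138,68,68,176,382]"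
  apply (simp add: upt_rec)
  apply (simp add: cw_def pl_def)
  done
lemma w40: "list_all2 (cw 40) [Suc 40..<128] [264,280,296,332,344,372,388,372,267,283,299,333,345,372,391,332,266,282,298,332,345,373,390,388,265,282,299,334,346,374,388,264,264,283,298,335,346,375,389,280,267,280,297,334,347,375,390,296,266,281,296,335,347,374,391,264,264,283,298,335,346,375,389,388,265,282,299,334,346,374,388,296,266,281,296,335,347,374,391,280,267,280,297,334,347,375,390]"
  apply (simp add: upt_rec)
  apply (simp add: cw_def pl_def)
  done
lemma w41: "list_all2 (cw 41) [Suc 41..<128] [235,99,156,65,216,141,263,273,114,250,54,235,235,190,270,273,5,141,80,141,250,175,270,263,190,54,20,201,5,80,264,264,201,65,114,175,20,65,257,270,80,216,216,5,39,114,263,257,39,175,190,99,54,99,264,264,65,201,175,114,65,20,263,270,54,190,201,20,80,5,257,263,175,39,99,190,99,54,270,257,216,80,5,216,114,39]"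
  apply (simp add: upt_rec)
  apply (simp add: cw_def pl_def)
  done
lemma w42: "list_all2 (cw 42) [Suc 42..<128] [136,118,169,52,111,285,202,291,169,169,235,235,45,278,52,285,87,12,52,78,242,291,145,294,242,202,78,136,136,278,111,294,12,111,145,45,87,280,78,280,45,176,211,242,21,291,176,278,211,21,12,87,202,294,12,278,111,45,87,111,145,294,242,291,145,136,136,202,78,278,211,291,176,87,202,21,12,280,45,280,78,242,21,176,211]"
  apply (simp add: upt_rec)
  apply (simp add: cw_def pl_def)
  done
lemma w43: "list_all2 (cw 43) [Suc 43..<128] [244,46,185,234,305,219,48,303,31,82,197,1,305,82,185,315,167,150,1,185,309,76,167,315,150,31,136,136,303,197,46,309,46,219,76,48,303,125,150,315,197,167,48,219,296,244,31,296,125,99,244,99,309,46,197,303,48,76,219,46,315,167,76,309,136,136,31,150,296,31,244,296,99,244,99,125,315,150,125,303,219,48,167,197]"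
  apply (simp add: upt_rec)
  apply (simp add: cw_def pl_def)
  done
lemma w44: "list_all2 (cw 44) [Suc 44..<128] [221,66,30,319,66,107,66,331,3,95,168,332,233,129,192,332,168,181,42,319,42,221,221,321,107,233,55,321,129,55,95,331,192,3,181,326,95,42,233,331,30,30,3,326,244,192,107,319,181,244,129,331,192,3,181,321,129,55,95,321,107,233,55,319,42,221,221,319,181,244,129,326,244,192,107,331,30,30,3,326,95,42,233]"
  apply (simp add: upt_rec)
  apply (simp add: cw_def pl_def)
  done
lemma w45: "list_all2 (cw 45) [Suc 45..<128] [151,198,355,53,140,169,169,339,16,227,350,248,127,53,100,343,140,16,343,127,221,221,227,339,100,178,355,178,46,65,46,350,248,65,343,198,11,198,90,355,127,100,350,11,248,90,151,339,227,151,350,46,65,248,178,355,65,46,339,227,178,100,127,343,221,221,339,151,151,227,11,350,90,248,355,90,100,127,198,343,198,11]"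
  apply (simp add: upt_rec)
  apply (simp add: cw_def pl_def)
  done
lemma w46: "list_all2 (cw 46) [Suc 46..<128] [85,372,66,246,66,128,108,372,207,358,52,185,26,207,52,371,185,362,128,35,123,85,85,358,13,362,246,108,35,26,13,371,123,358,108,174,216,216,246,365,225,365,26,225,128,151,174,371,151,371,123,26,13,108,35,362,246,358,13,85,85,35,123,362,128,371,151,151,174,225,128,365,26,365,225,216,246,174,216,358,108]"
  apply (simp add: upt_rec)
  apply (simp add: cw_def pl_def)
  done
lemma w47: "list_all2 (cw 47) [Suc 47..<128] [395,36,8,183,67,161,252,385,385,67,36,141,121,141,155,383,388,8,252,161,85,85,208,388,383,111,208,155,111,121,183,395,395,198,183,198,50,30,30,378,383,161,155,252,8,50,121,378,395,183,121,111,155,208,111,383,388,208,85,85,161,252,8,388,378,121,50,8,252,155,161,383,378,30,30,50,198,183,198,395]"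
  apply (simp add: upt_rec)
  apply (simp add: cw_def pl_def)
  done
lemma w48: "list_all2 (cw 48) [Suc 48..<128] [260,284,304,316,352,372,392,304,261,285,304,317,353,373,393,316,263,286,306,316,353,374,394,352,262,287,306,317,352,375,395,392,261,286,307,318,355,375,392,260,260,287,307,319,354,374,393,392,261,286,307,318,355,375,392,260,260,287,307,319,354,374,393,316,263,286,306,316,353,374,394,352,262,287,306,317,352,375,395]"
  apply (simp add: upt_rec)
  apply (simp add: cw_def pl_def)
  done
lemma w49: "list_all2 (cw 49) [Suc 49..<128] [83,66,232,159,113,23,269,273,36,53,142,249,96,6,269,258,159,142,202,189,159,249,267,269,232,249,172,219,142,232,258,267,113,96,6,113,189,219,260,260,6,23,96,23,172,202,267,258,96,113,113,6,219,189,260,260,23,6,23,96,202,172,258,269,142,159,189,202,249,159,269,267,249,232,219,172,232,142]"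
  apply (simp add: upt_rec)
  apply (simp add: cw_def pl_def)
  done
lemma w50: "list_all2 (cw 50) [Suc 50..<128] [17,180,206,41,74,277,173,295,239,17,17,140,149,291,8,277,74,215,107,74,239,277,246,283,180,114,180,239,48,283,215,295,149,173,246,48,114,291,41,295,107,8,41,149,173,295,149,283,215,48,114,173,246,295,107,291,41,149,173,8,41,277,74,291,8,74,239,215,107,283,180,277,246,239,48,114,180]"
  apply (simp add: upt_rec)
  apply (simp add: cw_def pl_def)
  done
lemma w51: "list_all2 (cw 51) [Suc 51..<128] [169,213,62,92,304,203,152,304,17,17,250,228,310,213,134,299,32,152,115,213,303,92,15,314,152,92,183,109,303,228,183,310,115,32,203,134,299,109,62,314,203,228,15,62,310,183,228,303,134,203,32,115,314,62,109,299,62,15,228,203,299,134,213,310,213,115,152,32,314,15,92,303,109,183,92,152]"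
  apply (simp add: upt_rec)
  apply (simp add: cw_def pl_def)
  done
lemma w52: "list_all2 (cw 52) [Suc 52..<128] [119,157,245,333,67,94,43,327,220,119,119,316,128,2,54,316,31,43,106,322,43,232,180,331,180,193,232,327,245,245,2,331,106,220,94,327,94,31,128,322,193,54,220,331,106,220,94,327,245,245,2,322,193,54,220,327,94,31,128,316,31,43,106,316,128,2,54,331,180,193,232,322,43,232,180]"
  apply (simp add: upt_rec)
  apply (simp add: cw_def pl_def)
  done
lemma w53: "list_all2 (cw 53) [Suc 53..<128] [235,132,349,82,61,73,186,345,119,119,342,213,159,161,61,339,159,213,352,24,108,61,240,352,3,38,342,108,73,186,132,349,132,3,349,161,186,38,73,339,24,240,349,132,3,132,108,342,186,73,339,73,240,24,161,349,38,186,339,61,213,159,213,342,161,159,352,240,38,3,24,352,61,108]"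
  apply (simp add: upt_rec)
  apply (simp add: cw_def pl_def)
  done
lemma w54: "list_all2 (cw 54) [Suc 54..<128] [102,357,7,102,102,210,179,363,16,363,179,252,7,72,210,370,164,363,197,179,95,7,138,366,210,357,95,113,164,197,113,370,72,366,41,62,252,138,41,357,62,370,72,197,113,113,164,357,95,357,62,138,41,62,252,366,41,370,164,72,210,252,7,363,179,366,210,7,138,179,95,363,197]"
  apply (simp add: upt_rec)
  apply (simp add: cw_def pl_def)
  done
lemma w55: "list_all2 (cw 55) [Suc 55..<128] [385,112,102,102,207,168,1,379,391,59,190,74,227,112,74,379,382,92,146,112,217,92,45,379,392,245,245,45,132,59,132,392,382,146,217,23,190,23,227,391,392,132,59,132,45,245,245,392,391,227,23,190,23,217,146,382,379,74,112,227,74,190,59,391,379,45,92,217,112,146,92,382]"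
  apply (simp add: upt_rec)
  apply (simp add: cw_def pl_def)
  done
lemma w56: "list_all2 (cw 56) [Suc 56..<128] [268,276,304,332,348,356,384,268,268,277,306,334,351,358,386,276,269,276,306,335,350,359,387,356,270,279,307,334,349,356,387,348,271,278,307,335,348,357,386,348,271,278,307,335,348,357,386,356,270,279,307,334,349,356,387,276,269,276,306,335,350,359,387,268,268,277,306,334,351,358,386]"
  apply (simp add: upt_rec)
  apply (simp add: cw_def pl_def)
  done
lemma w57: "list_all2 (cw 57) [Suc 57..<128] [218,188,37,52,22,97,268,268,97,7,97,112,233,158,266,259,22,112,7,22,248,143,259,261,143,233,173,188,203,188,261,266,248,158,203,218,218,173,266,261,158,248,218,203,173,218,261,259,233,143,188,173,188,203,259,266,112,22,22,7,143,248,268,268,7,97,112,97,158,233]"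
  apply (simp add: upt_rec)
  apply (simp add: cw_def pl_def)
  done
lemma w58: "list_all2 (cw 58) [Suc 58..<128] [102,251,226,195,185,290,127,282,195,61,152,5,195,276,129,276,61,152,71,160,28,282,160,295,28,71,5,127,94,290,94,295,226,226,218,218,129,295,226,290,94,218,129,226,218,295,28,282,160,127,94,71,5,276,61,276,129,160,28,152,71,282,195,290,127,5,195,61,152]"
  apply (simp add: upt_rec)
  apply (simp add: cw_def pl_def)
  done
lemma w59: "list_all2 (cw 59) [Suc 59..<128] [147,141,162,222,311,162,120,315,162,4,43,239,302,43,241,298,26,192,239,87,302,147,73,315,241,188,147,188,298,26,192,311,73,120,87,4,311,192,26,298,4,87,120,73,315,73,147,302,188,147,188,241,298,241,43,302,87,239,192,26,315,120,162,311,239,43,4,162]"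
  apply (simp add: upt_rec)
  apply (simp add: cw_def pl_def)
  done
lemma w60: "list_all2 (cw 60) [Suc 60..<128] [17,56,77,317,230,167,142,330,210,100,80,323,77,77,12,317,121,142,210,327,147,80,186,323,167,147,100,327,56,186,56,330,12,121,230,330,12,121,230,327,56,186,56,323,167,147,100,327,147,80,186,317,121,142,210,323,77,77,12,330,210,100,80,317,230,167,142]"
  apply (simp add: upt_rec)
  apply (simp add: cw_def pl_def)
  done
lemma w61: "list_all2 (cw 61) [Suc 61..<128] [47,91,343,179,64,101,150,353,199,249,353,126,179,249,91,338,91,10,343,10,150,126,47,338,220,47,348,199,101,226,226,348,64,220,348,226,220,64,199,348,226,101,338,47,47,220,10,343,126,150,338,91,10,91,126,353,249,179,353,150,249,199,179,343,101,64]"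
  apply (simp add: upt_rec)
  apply (simp add: cw_def pl_def)
  done
lemma w62: "list_all2 (cw 62) [Suc 62..<128] [119,363,162,89,195,162,78,367,195,363,212,22,155,237,22,371,181,356,78,212,96,47,237,356,47,367,56,155,56,96,181,371,89,371,89,96,181,155,56,367,56,356,47,47,237,212,96,356,78,371,181,237,22,22,155,363,212,367,195,162,78,89,195,363,162]"
  apply (simp add: upt_rec)
  apply (simp add: cw_def pl_def)
  done
lemma w63: "list_all2 (cw 63) [Suc 63..<128] [390,42,97,242,97,131,60,379,383,77,77,200,91,175,91,379,393,228,42,149,6,200,242,390,383,131,6,175,60,228,149,393,393,149,228,60,175,6,131,383,390,242,200,6,149,42,228,393,379,91,175,91,200,77,77,383,379,60,131,97,242,97,42,390]"
  apply (simp add: upt_rec)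
  apply (simp add: cw_def pl_def)
  done
lemma w64: "list_all2 (cw 64) [Suc 64..<128] [268,288,308,316,340,360,388,360,269,289,309,317,341,360,389,340,270,289,310,318,340,361,390,288,271,288,311,319,341,361,391,308,271,290,308,318,342,362,389,388,270,291,309,319,343,362,388,316,269,291,310,316,342,363,391,268,268,290,311,317,343,363,390]"
  apply (simp add: upt_rec)
  apply (simp add: cw_def pl_def)
  done
lemma w65: "list_all2 (cw 65) [Suc 65..<128] [196,25,162,247,93,213,265,274,179,110,196,145,76,196,258,274,42,247,110,59,127,247,263,274,93,128,8,93,110,230,265,258,59,230,25,76,25,145,263,265,76,145,127,42,8,128,258,263,213,8,213,128,59,179,268,268,162,127,179,230,42,162]"
  apply (simp add: upt_rec)
  apply (simp add: cw_def pl_def)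
  done
lemma w66: "list_all2 (cw 66) [Suc 66..<128] [221,97,58,159,27,277,58,294,35,196,229,58,196,282,27,286,2,27,167,229,134,288,229,288,252,190,120,64,89,294,89,286,64,134,35,120,2,294,167,282,190,35,252,221,221,277,134,286,159,252,190,2,159,282,120,277,97,89,97,167,64]"
  apply (simp add: upt_rec)
  apply (simp add: cw_def pl_def)
  done
lemma w67: "list_all2 (cw 67) [Suc 67..<128] [191,236,74,195,301,144,84,306,7,40,142,123,301,40,236,315,236,84,242,144,299,161,101,301,84,144,54,40,308,123,191,308,25,191,25,101,315,242,54,299,161,123,221,221,299,74,142,306,74,7,161,54,315,195,7,306,242,195,101,142]"
  apply (simp add: upt_rec)
  apply (simp add: cw_def pl_def)
  done
lemma w68: "list_all2 (cw 68) [Suc 68..<128] [85,254,124,321,9,139,61,325,254,20,254,325,215,150,139,334,32,9,72,325,124,124,9,330,139,227,202,330,72,191,215,321,191,32,20,321,227,85,85,334,20,202,150,316,61,72,227,316,202,215,32,330,150,162,97,334,97,61,162]"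
  apply (simp add: upt_rec)
  apply (simp add: cw_def pl_def)
  done
lemma w69: "list_all2 (cw 69) [Suc 69..<128] [166,33,353,58,201,112,152,346,58,210,340,78,236,247,236,340,189,247,351,131,31,107,33,339,33,4,351,166,166,201,4,346,131,189,339,107,85,85,201,346,31,78,339,31,112,210,189,353,152,107,353,210,131,78,112,351,4,152]"
  apply (simp add: upt_rec)
  apply (simp add: cw_def pl_def)
  done
lemma w70: "list_all2 (cw 70) [Suc 70..<128] [136,360,43,208,18,177,254,360,254,358,177,18,233,115,5,370,100,367,199,93,177,60,93,374,18,370,166,166,60,199,208,367,115,358,208,233,100,136,136,374,5,370,74,43,159,74,115,374,159,367,60,100,199,5,43,358,233]"
  apply (simp add: upt_rec)
  apply (simp add: cw_def pl_def)
  done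
lemma w71: "list_all2 (cw 71) [Suc 71..<128] [381,178,55,249,70,13,239,379,394,27,80,164,27,106,70,381,381,124,124,158,33,70,33,386,394,106,158,13,178,164,55,386,388,13,178,55,136,136,80,388,379,164,213,106,213,239,249,394,379,195,249,80,239,195,158,386]"
  apply (simp add: upt_rec)
  apply (simp add: cw_def pl_def)
  done
lemma w72: "list_all2 (cw 72) [Suc 72..<128] [264,276,300,320,352,360,380,300,267,279,300,323,355,361,381,380,266,278,301,322,354,361,380,264,264,278,303,321,355,362,383,320,265,279,302,320,354,362,382,276,266,276,302,323,353,363,383,352,267,277,303,322,352,363,382]"
  apply (simp add: upt_rec)
  apply (simp add: cw_def pl_def)
  done
lemma w73: "list_all2 (cw 73) [Suc 73..<128] [77,231,111,92,58,163,259,274,212,126,197,246,9,144,262,274,163,9,163,144,24,129,264,264,197,111,178,129,111,246,262,259,178,24,212,231,126,231,259,269,43,129,126,77,77,212,269,262,92,246,24,43,92,197]"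
  apply (simp add: upt_rec)
  apply (simp add: cw_def pl_def)
  done
lemma w74: "list_all2 (cw 74) [Suc 74..<128] [170,46,22,117,232,283,108,289,139,241,84,170,170,289,146,287,117,84,139,15,117,294,46,283,201,108,208,55,46,294,208,287,55,201,15,146,241,276,241,276,22,22,77,77,179,283,15,287,232,179,146,232,108]"
  apply (simp add: upt_rec)
  apply (simp add: cw_def pl_def)
  done
lemma w75: "list_all2 (cw 75) [Suc 75..<128] [133,180,214,65,300,95,18,300,110,200,170,170,298,214,155,314,214,12,110,18,309,12,65,298,155,35,65,95,314,133,200,309,35,231,133,231,298,61,112,306,200,155,249,12,314,180,249,306,112,95,61,180]"
  apply (simp add: upt_rec)
  apply (simp add: cw_def pl_def)
  done
lemma w76: "list_all2 (cw 76) [Suc 76..<128] [51,91,196,325,177,51,51,331,237,70,114,325,26,217,177,335,70,172,240,331,46,26,111,335,114,111,46,320,133,240,237,320,217,133,172,317,91,237,91,335,7,152,26,331,240,7,217,317,172,114,152]"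
  apply (simp add: upt_rec)
  apply (simp add: cw_def pl_def)
  done
lemma w77: "list_all2 (cw 77) [Suc 77..<128] [98,254,341,40,51,51,71,338,229,219,350,229,192,175,138,341,121,40,350,192,121,13,175,346,219,145,338,13,138,145,98,346,71,98,338,121,175,22,22,350,192,71,352,180,92,138,219,352,92,180]"
  apply (simp add: upt_rec)
  apply (simp add: cw_def pl_def)
  done
lemma w78: "list_all2 (cw 78) [Suc 78..<128] [153,359,160,183,45,153,153,375,3,366,214,248,117,214,193,371,117,371,183,3,248,45,76,375,20,359,193,76,160,98,20,366,98,371,91,142,91,160,239,359,248,366,45,193,3,239,183,375,142]"
  apply (simp add: upt_rec)
  apply (simp add: cw_def pl_def)
  done
lemma w79: "list_all2 (cw 79) [Suc 79..<128] [395,10,143,28,153,153,48,387,380,109,163,38,163,181,87,380,395,123,65,181,48,87,65,389,389,28,109,143,10,123,38,387,379,181,10,210,87,28,143,387,379,210,38,232,109,48,232,395]"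
  apply (simp add: upt_rec)
  apply (simp add: cw_def pl_def)
  done
lemma w80: "list_all2 (cw 80) [Suc 80..<128] [256,280,300,324,340,356,392,324,257,281,301,324,341,357,393,392,258,283,303,327,342,357,392,356,259,282,302,327,343,356,393,256,256,281,302,326,342,359,394,280,257,280,303,326,343,358,395]"
  apply (simp add: upt_rec)
  apply (simp add: cw_def pl_def)
  done
lemma w81: "list_all2 (cw 81) [Suc 81..<128] [245,198,27,130,147,57,261,274,130,177,125,228,130,40,267,261,228,215,108,245,245,95,261,270,147,160,10,147,228,78,256,256,10,57,160,57,215,125,270,267,125,78,198,95,198,108]"
  apply (simp add: upt_rec)
  apply (simp add: cw_def pl_def)
  done
lemma w82: "list_all2 (cw 82) [Suc 82..<128] [51,236,113,104,205,289,11,295,205,73,174,205,18,295,183,286,113,113,245,245,73,295,73,279,143,212,42,80,150,279,104,286,174,11,104,143,212,280,150,280,80,174,183,42,11]"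
  apply (simp add: upt_rec)
  apply (simp add: cw_def pl_def)
  done
lemma w83: "list_all2 (cw 83) [Suc 83..<128] [216,79,81,247,297,79,186,307,96,139,149,79,310,149,96,307,45,164,186,2,315,28,233,307,149,96,126,186,297,164,81,310,126,28,2,81,315,45,216,297,198,216,198,233]"
  apply (simp add: upt_rec)
  apply (simp add: cw_def pl_def)
  done
lemma w84: "list_all2 (cw 84) [Suc 84..<128] [153,132,47,324,176,6,90,324,50,110,173,331,132,197,132,318,6,173,115,323,47,47,6,334,173,71,241,318,241,50,176,323,115,90,71,331,90,216,50,334,216,176,197]"
  apply (simp add: upt_rec)
  apply (simp add: cw_def pl_def)
  done
lemma w85: "list_all2 (cw 85) [Suc 85..<128] [30,188,349,79,130,211,84,347,130,79,349,106,59,113,113,355,32,246,338,167,200,237,188,349,188,5,338,211,237,106,200,347,59,32,355,30,30,246,5,347,167,211]"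
  apply (simp add: upt_rec)
  apply (simp add: cw_def pl_def)
  done
lemma w86: "list_all2 (cw 86) [Suc 86..<128] [170,365,229,39,9,203,70,361,220,370,132,220,132,48,203,375,189,356,242,147,220,127,147,356,203,370,104,81,39,189,104,365,81,365,30,30,127,242,48,375,39]"
  apply (simp add: upt_rec)
  apply (simp add: cw_def pl_def)
  done
lemma w87: "list_all2 (cw 87) [Suc 87..<128] [381,94,225,205,21,144,205,378,392,72,3,94,134,114,219,392,390,47,47,100,188,94,188,387,378,134,72,57,225,57,21,387,378,225,100,3,219,21,114,390]"
  apply (simp add: upt_rec)
  apply (simp add: cw_def pl_def)
  done
lemma w88: "list_all2 (cw 88) [Suc 88..<128] [260,288,296,324,348,364,380,348,261,290,298,327,348,367,383,260,260,291,299,327,349,366,382,296,263,291,296,326,350,365,383,364,262,290,297,326,351,364,382]"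
  apply (simp add: upt_rec)
  apply (simp add: cw_def pl_def)
  done
lemma w89: "list_all2 (cw 89) [Suc 89..<128] [124,56,214,41,244,79,266,271,26,94,199,56,131,56,260,260,109,41,161,94,146,41,257,266,244,176,11,244,161,26,271,257,131,199,109,146,176,11]"
  apply (simp add: upt_rec)
  apply (simp add: cw_def pl_def)
  done
lemma w90: "list_all2 (cw 90) [Suc 90..<128] [68,163,93,130,62,295,192,278,248,155,6,186,101,295,62,287,6,62,217,31,186,278,31,281,39,225,155,192,248,281,225,287,217,68,68,101,39]"
  apply (simp add: upt_rec)
  apply (simp add: cw_def pl_def)
  done
lemma w91: "list_all2 (cw 91) [Suc 91..<128] [226,23,205,117,311,226,158,307,175,56,226,56,314,107,23,307,23,252,38,128,296,211,175,296,252,128,90,107,314,90,38,311,68,68,158,211]"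
  apply (simp add: upt_rec)
  apply (simp add: cw_def pl_def)
  done
lemma w92: "list_all2 (cw 92) [Suc 92..<128] [255,33,151,330,226,96,60,335,203,226,73,322,73,138,190,319,96,8,203,319,151,151,8,335,190,21,125,330,60,125,138,322,21,255,255]"
  apply (simp add: upt_rec)
  apply (simp add: cw_def pl_def)
  done
lemma w93: "list_all2 (cw 93) [Suc 93..<128] [218,99,348,12,228,181,218,348,120,218,339,193,23,41,23,354,228,41,339,181,50,174,99,347,99,12,354,120,193,50,174,347,255,255]"
  apply (simp add: upt_rec)
  apply (simp add: cw_def pl_def)
  done
lemma w94: "list_all2 (cw 94) [Suc 94..<128] [187,371,149,121,64,218,87,357,218,357,227,54,24,149,15,374,172,371,121,244,227,87,244,374,54,364,15,187,187,24,172,364,64]"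
  apply (simp add: upt_rec)
  apply (simp add: cw_def pl_def)
  done
lemma w95: "list_all2 (cw 95) [Suc 95..<128] [393,89,220,230,4,129,173,386,391,62,240,220,62,173,202,393,378,151,151,129,99,202,99,391,378,240,187,187,89,230,4,386]"
  apply (simp add: upt_rec)
  apply (simp add: cw_def pl_def)
  done
lemma w96: "list_all2 (cw 96) [Suc 96..<128] [264,292,308,328,348,368,392,292,265,292,309,329,349,369,393,368,266,293,310,329,350,368,394,328,267,293,311,328,351,369,395]"
  apply (simp add: upt_rec)
  apply (simp add: cw_def pl_def)
  done
lemma w97: "list_all2 (cw 97) [Suc 97..<128] [166,132,243,29,226,46,261,275,209,243,149,123,243,63,258,275,72,106,63,209,192,12,271,275,63,29,89,183,209,29]"
  apply (simp add: upt_rec)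
  apply (simp add: cw_def pl_def)
  done
lemma w98: "list_all2 (cw 98) [Suc 98..<128] [34,88,191,65,135,292,88,292,220,253,96,228,88,278,121,286,253,34,34,59,26,283,135,290,3,135,253,158,197]"
  apply (simp add: upt_rec)
  apply (simp add: cw_def pl_def)
  done
lemma w99: "list_all2 (cw 99) [Suc 99..<128] [113,154,111,171,313,13,171,307,201,94,171,19,298,181,19,313,34,34,215,248,313,60,154,303,154,230,19,64]"
  apply (simp add: upt_rec)
  apply (simp add: cw_def pl_def)
  done
lemma w100: "list_all2 (cw 100) [Suc 100..<128] [238,25,218,321,88,178,243,327,69,243,88,318,134,175,69,335,155,238,238,328,45,69,199,328,48,4,108]"
  apply (simp add: upt_rec)
  apply (simp add: cw_def pl_def)
  done
lemma w101: "list_all2 (cw 101) [Suc 101..<128] [245,56,337,208,76,6,35,346,105,203,337,164,105,129,87,342,238,238,355,105,154,29,154,337,114,29]"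
  apply (simp add: upt_rec)
  apply (simp add: cw_def pl_def)
  done
lemma w102: "list_all2 (cw 102) [Suc 102..<128] [204,357,148,14,55,86,173,362,186,368,14,204,204,148,86,368,32,367,120,131,148,219,14,375,86]"
  apply (simp add: upt_rec)
  apply (simp add: cw_def pl_def)
  done
lemma w103: "list_all2 (cw 103) [Suc 103..<128] [389,73,171,145,224,20,171,377,377,224,204,204,189,115,2,383,377,135,224,246,135,95,101,386]"
  apply (simp add: upt_rec)
  apply (simp add: cw_def pl_def)
  done
lemma w104: "list_all2 (cw 104) [Suc 104..<128] [260,292,312,320,336,356,388,336,263,293,313,323,336,359,391,312,262,293,312,322,337,358,390]"
  apply (simp add: upt_rec)
  apply (simp add: cw_def pl_def)
  done
lemma w105: "list_all2 (cw 105) [Suc 105..<128] [47,122,62,182,133,88,259,275,182,227,148,28,182,107,270,275,193,148,242,122,167,122]"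
  apply (simp add: upt_rec)
  apply (simp add: cw_def pl_def)
  done
lemma w106: "list_all2 (cw 106) [Suc 106..<128] [85,23,147,171,116,279,14,291,116,200,209,116,54,282,240,287,138,109,14,209,233]"
  apply (simp add: upt_rec)
  apply (simp add: cw_def pl_def)
  done
lemma w107: "list_all2 (cw 107) [Suc 107..<128] [75,194,243,41,299,194,237,302,160,190,143,194,312,75,100,312,24,122,75,122]"
  apply (simp add: upt_rec)
  apply (simp add: cw_def pl_def)
  done
lemma w108: "list_all2 (cw 108) [Suc 108..<128] [136,188,98,319,224,10,253,329,86,161,212,329,75,224,127,334,253,75,86]"
  apply (simp add: upt_rec)
  apply (simp add: cw_def pl_def)
  done
lemma w109: "list_all2 (cw 109) [Suc 109..<128] [49,231,336,194,182,69,252,336,182,194,354,15,69,217,49,343,42,49]"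
  apply (simp add: upt_rec)
  apply (simp add: cw_def pl_def)
  done
lemma w110: "list_all2 (cw 110) [Suc 110..<128] [221,369,31,105,8,126,202,374,71,366,105,38,80,49,146,369,49]"
  apply (simp add: upt_rec)
  apply (simp add: cw_def pl_def)
  done
lemma w111: "list_all2 (cw 111) [Suc 111..<128] [377,241,19,116,63,128,116,387,377,150,63,78,5,172,19,382]"
  apply (simp add: upt_rec)
  apply (simp add: cw_def pl_def)
  done
lemma w112: "list_all2 (cw 112) [Suc 112..<128] [256,276,296,316,336,368,376,376,257,277,297,317,337,369,376]"
  apply (simp add: upt_rec)
  apply (simp add: cw_def pl_def)
  done
lemma w113: "list_all2 (cw 113) [Suc 113..<128] [151,91,74,104,44,194,269,275,224,44,44,14,61,211]"
  apply (simp add: upt_rec)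
  apply (simp add: cw_def pl_def)
  done
lemma w114: "list_all2 (cw 114) [Suc 114..<128] [204,213,244,182,81,281,105,293,50,112,43,19,142]"
  apply (simp add: upt_rec)
  apply (simp add: cw_def pl_def)
  done
lemma w115: "list_all2 (cw 115) [Suc 115..<128] [22,57,116,159,313,210,69,306,174,253,176,39]"
  apply (simp add: upt_rec)
  apply (simp add: cw_def pl_def)
  done
lemma w116: "list_all2 (cw 116) [Suc 116..<128] [34,99,137,329,225,63,148,326,137,137,11]"
  apply (simp add: upt_rec)
  apply (simp add: cw_def pl_def)
  done
lemma w117: "list_all2 (cw 117) [Suc 117..<128] [77,165,353,165,7,165,239,347,209,86]"
  apply (simp add: upt_rec)
  apply (simp add: cw_def pl_def)
  done
lemma w118: "list_all2 (cw 118) [Suc 118..<128] [238,365,90,249,44,44,21,363,152]"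
  apply (simp add: upt_rec)
  apply (simp add: cw_def pl_def)
  done
lemma w119: "list_all2 (cw 119) [Suc 119..<128] [376,165,125,165,179,137,137,376]"
  apply (simp add: upt_rec)
  apply (simp add: cw_def pl_def)
  done
lemma w120: "list_all2 (cw 120) [Suc 120..<128] [268,280,312,328,352,364,376]"
  apply (simp add: upt_rec)
  apply (simp add: cw_def pl_def)
  done
lemma w121: "list_all2 (cw 121) [Suc 121..<128] [30,165,135,195,75,180]"
  apply (simp add: upt_rec)
  apply (simp add: cw_def pl_def)
  done
lemma w122: "list_all2 (cw 122) [Suc 122..<128] [187,154,216,92,162]"
  apply (simp add: upt_rec)
  apply (simp add: cw_def pl_def)
  done
lemma w123: "list_all2 (cw 123) [Suc 123..<128] [44,97,232,29]"
  apply (simp add: upt_rec)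
  apply (simp add: cw_def pl_def)
  done
lemma w124: "list_all2 (cw 124) [Suc 124..<128] [68,198,49]"
  apply (simp add: upt_rec)
  apply (simp add: cw_def pl_def)
  done
lemma w125: "list_all2 (cw 125) [Suc 125..<128] [137,122]"
  apply (simp add: upt_rec)
  apply (simp add: cw_def pl_def)
  done
lemma w126: "list_all2 (cw 126) [Suc 126..<128] [255]"
  apply (simp add: upt_rec)
  apply (simp add: cw_def pl_def)
  done
lemma okp_all: assumes "j < 396" shows "okp j"
proof -
  have e: "[0..<396] = 0 # 1 # [2..<396]" by (simp add: upt_conv_Cons)
  have "list_all okp [0..<396]" unfolding e by (rule okj)
  then show ?thesis using assms by (simp add: list_all_iff)
qed

lemma cfI: assumes "list_all2 (cw m) [Suc m..<128] W" shows "cf m"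
  unfolding cf_def
proof (intro allI impI)
  fix n assume "m < n \<and> n < 128"
  then have "n \<in> set [Suc m..<128]" by simp
  then obtain i where i: "i < length [Suc m..<128]" "[Suc m..<128] ! i = n" by (metis in_set_conv_nth)
  have "cw m ([Suc m..<128] ! i) (W ! i)" by (rule list_all2_nthD[OF assms i(1)])
  then show "\<exists>j. cw m n j" using i(2) by blast
qed

lemma wc1: "cf 1" by (rule cfI[OF w1])
lemma wc2: "cf 2" by (rule cfI[OF w2])
lemma wc3: "cf 3" by (rule cfI[OF w3])
lemma wc4: "cf 4" by (rule cfI[OF w4])
lemma wc5: "cf 5" by (rule cfI[OF w5])
lemma wc6: "cf 6" by (rule cfI[OF w6])
lemma wc7: "cf 7" by (rule cfI[OF w7])
lemma wc8: "cf 8" by (rule cfI[OF w8])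
lemma wc9: "cf 9" by (rule cfI[OF w9])
lemma wc10: "cf 10" by (rule cfI[OF w10])
lemma wc11: "cf 11" by (rule cfI[OF w11])
lemma wc12: "cf 12" by (rule cfI[OF w12])
lemma wc13: "cf 13" by (rule cfI[OF w13])
lemma wc14: "cf 14" by (rule cfI[OF w14])
lemma wc15: "cf 15" by (rule cfI[OF w15])
lemma wc16: "cf 16" by (rule cfI[OF w16])
lemma wc17: "cf 17" by (rule cfI[OF w17])
lemma wc18: "cf 18" by (rule cfI[OF w18])
lemma wc19: "cf 19" by (rule cfI[OF w19])
lemma wc20: "cf 20" by (rule cfI[OF w20])
lemma wc21: "cf 21" by (rule cfI[OF w21])
lemma wc22: "cf 22" by (rule cfI[OF w22])
lemma wc23: "cf 23" by (rule cfI[OF w23])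
lemma wc24: "cf 24" by (rule cfI[OF w24])
lemma wc25: "cf 25" by (rule cfI[OF w25])
lemma wc26: "cf 26" by (rule cfI[OF w26])
lemma wc27: "cf 27" by (rule cfI[OF w27])
lemma wc28: "cf 28" by (rule cfI[OF w28])
lemma wc29: "cf 29" by (rule cfI[OF w29])
lemma wc30: "cf 30" by (rule cfI[OF w30])
lemma wc31: "cf 31" by (rule cfI[OF w31])
lemma wc32: "cf 32" by (rule cfI[OF w32])
lemma wc33: "cf 33" by (rule cfI[OF w33])
lemma wc34: "cf 34" by (rule cfI[OF w34])
lemma wc35: "cf 35" by (rule cfI[OF w35])
lemma wc36: "cf 36" by (rule cfI[OF w36])
lemma wc37: "cf 37" by (rule cfI[OF w37])
lemma wc38: "cf 38" by (rule cfI[OF w38])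
lemma wc39: "cf 39" by (rule cfI[OF w39])
lemma wc40: "cf 40" by (rule cfI[OF w40])
lemma wc41: "cf 41" by (rule cfI[OF w41])
lemma wc42: "cf 42" by (rule cfI[OF w42])
lemma wc43: "cf 43" by (rule cfI[OF w43])
lemma wc44: "cf 44" by (rule cfI[OF w44])
lemma wc45: "cf 45" by (rule cfI[OF w45])
lemma wc46: "cf 46" by (rule cfI[OF w46])
lemma wc47: "cf 47" by (rule cfI[OF w47])
lemma wc48: "cf 48" by (rule cfI[OF w48])
lemma wc49: "cf 49" by (rule cfI[OF w49])
lemma wc50: "cf 50" by (rule cfI[OF w50])
lemma wc51: "cf 51" by (rule cfI[OF w51])
lemma wc52: "cf 52" by (rule cfI[OF w52])
lemma wc53: "cf 53" by (rule cfI[OF w53])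
lemma wc54: "cf 54" by (rule cfI[OF w54])
lemma wc55: "cf 55" by (rule cfI[OF w55])
lemma wc56: "cf 56" by (rule cfI[OF w56])
lemma wc57: "cf 57" by (rule cfI[OF w57])
lemma wc58: "cf 58" by (rule cfI[OF w58])
lemma wc59: "cf 59" by (rule cfI[OF w59])
lemma wc60: "cf 60" by (rule cfI[OF w60])
lemma wc61: "cf 61" by (rule cfI[OF w61])
lemma wc62: "cf 62" by (rule cfI[OF w62])
lemma wc63: "cf 63" by (rule cfI[OF w63])
lemma wc64: "cf 64" by (rule cfI[OF w64])
lemma wc65: "cf 65" by (rule cfI[OF w65])
lemma wc66: "cf 66" by (rule cfI[OF w66])
lemma wc67: "cf 67" by (rule cfI[OF w67])
lemma wc68: "cf 68" by (rule cfI[OF w68])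
lemma wc69: "cf 69" by (rule cfI[OF w69])
lemma wc70: "cf 70" by (rule cfI[OF w70])
lemma wc71: "cf 71" by (rule cfI[OF w71])
lemma wc72: "cf 72" by (rule cfI[OF w72])
lemma wc73: "cf 73" by (rule cfI[OF w73])
lemma wc74: "cf 74" by (rule cfI[OF w74])
lemma wc75: "cf 75" by (rule cfI[OF w75])
lemma wc76: "cf 76" by (rule cfI[OF w76])
lemma wc77: "cf 77" by (rule cfI[OF w77])
lemma wc78: "cf 78" by (rule cfI[OF w78])
lemma wc79: "cf 79" by (rule cfI[OF w79])
lemma wc80: "cf 80" by (rule cfI[OF w80])
lemma wc81: "cf 81" by (rule cfI[OF w81])
lemma wc82: "cf 82" by (rule cfI[OF w82])
lemma wc83: "cf 83" by (rule cfI[OF w83])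
lemma wc84: "cf 84" by (rule cfI[OF w84])
lemma wc85: "cf 85" by (rule cfI[OF w85])
lemma wc86: "cf 86" by (rule cfI[OF w86])
lemma wc87: "cf 87" by (rule cfI[OF w87])
lemma wc88: "cf 88" by (rule cfI[OF w88])
lemma wc89: "cf 89" by (rule cfI[OF w89])
lemma wc90: "cf 90" by (rule cfI[OF w90])
lemma wc91: "cf 91" by (rule cfI[OF w91])
lemma wc92: "cf 92" by (rule cfI[OF w92])
lemma wc93: "cf 93" by (rule cfI[OF w93])
lemma wc94: "cf 94" by (rule cfI[OF w94])
lemma wc95: "cf 95" by (rule cfI[OF w95])
lemma wc96: "cf 96" by (rule cfI[OF w96])
lemma wc97: "cf 97" by (rule cfI[OF w97])
lemma wc98: "cf 98" by (rule cfI[OF w98])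
lemma wc99: "cf 99" by (rule cfI[OF w99])
lemma wc100: "cf 100" by (rule cfI[OF w100])
lemma wc101: "cf 101" by (rule cfI[OF w101])
lemma wc102: "cf 102" by (rule cfI[OF w102])
lemma wc103: "cf 103" by (rule cfI[OF w103])
lemma wc104: "cf 104" by (rule cfI[OF w104])
lemma wc105: "cf 105" by (rule cfI[OF w105])
lemma wc106: "cf 106" by (rule cfI[OF w106])
lemma wc107: "cf 107" by (rule cfI[OF w107])
lemma wc108: "cf 108" by (rule cfI[OF w108])
lemma wc109: "cf 109" by (rule cfI[OF w109])
lemma wc110: "cf 110" by (rule cfI[OF w110])
lemma wc111: "cf 111" by (rule cfI[OF w111])
lemma wc112: "cf 112" by (rule cfI[OF w112])
lemma wc113: "cf 113" by (rule cfI[OF w113])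
lemma wc114: "cf 114" by (rule cfI[OF w114])
lemma wc115: "cf 115" by (rule cfI[OF w115])
lemma wc116: "cf 116" by (rule cfI[OF w116])
lemma wc117: "cf 117" by (rule cfI[OF w117])
lemma wc118: "cf 118" by (rule cfI[OF w118])
lemma wc119: "cf 119" by (rule cfI[OF w119])
lemma wc120: "cf 120" by (rule cfI[OF w120])
lemma wc121: "cf 121" by (rule cfI[OF w121])
lemma wc122: "cf 122" by (rule cfI[OF w122])
lemma wc123: "cf 123" by (rule cfI[OF w123])
lemma wc124: "cf 124" by (rule cfI[OF w124])
lemma wc125: "cf 125" by (rule cfI[OF w125])
lemma wc126: "cf 126" by (rule cfI[OF w126])

lemma allcf: "list_all cf [2..<127]"
  by (simp add: upt_rec wc2 wc3 wc4 wc5 wc6 wc7 wc8 wc9 wc10 wc11 wc12 wc13 wc14 wc15 wc16 wc17 wc18 wc19 wc20 wc21 wc22 wc23 wc24 wc25 wc26 wc27 wc28 wc29 wc30 wc31 wc32 wc33 wc34 wc35 wc36 wc37 wc38 wc39 wc40 wc41 wc42 wc43 wc44 wc45 wc46 wc47 wc48 wc49 wc50 wc51 wc52 wc53 wc54 wc55 wc56 wc57 wc58 wc59 wc60 wc61 wc62 wc63 wc64 wc65 wc66 wc67 wc68 wc69 wc70 wc71 wc72 wc73 wc74 wc75 wc76 wc77 wc78 wc79 wc80 wc81 wc82 wc83 wc84 wc85 wc86 wc87 wc88 wc89 wc90 wc91 wc92 wc93 wc94 wc95 wc96 wc97 wc98 wc99 wc100 wc101 wc102 wc103 wc104 wc105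 wc106 wc107 wc108 wc109 wc110 wc111 wc112 wc113 wc114 wc115 wc116 wc117 wc118 wc119 wc120 wc121 wc122 wc123 wc124 wc125 wc126)

lemma C1: assumes "0 < m" "m < n" "n < 128" shows "\<exists>j. cw m n j"
proof -
  have "cf m"
  proof (cases "m = 1")
    case True
    then show ?thesis using wc1 by simp
  next
    case False
    then have "m \<in> {2..<127}" using assms by auto
    then show ?thesis using allcf unfolding list_all_iff set_upt by blast
  qed
  then show ?thesis using assms unfolding cf_def by blast
qed

definition ix :: "7 \<Rightarrow> nat" where "ix i = nat (Rep_bit1 i)"
definition dec :: "nat \<Rightarrow> bit ^ 7" where "dec m = (\<chi> i. if bit m (ix i) then 1 else 0)"

lemma ix_lt: "ix i < 7"
  using Rep_bit1[of i] by (simp add: ix_def nat_less_iff)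

lemma ix_Abs: "k < 7 \<Longrightarrow> ix (Abs_bit1 (int k) :: 7) = k"
  by (simp add: ix_def Abs_bit1_inverse)

lemma dec_xor: "dec (xor m n) = dec m + dec n"
  by (auto simp: dec_def vec_eq_iff bit_xor_iff)

lemma dec_0: "dec 0 = 0"
  by (simp add: dec_def vec_eq_iff)

lemma bit_big: assumes "(m::nat) < 128" "7 \<le> k" shows "\<not> bit m k"
proof -
  have "(128::nat) = 2^7" by simp
  also have "\<dots> \<le> 2^k" using assms(2) by (rule power_increasing) simp
  finally have "m < 2^k" using assms(1) by simp
  then show ?thesis by (simp add: bit_iff_odd)
qed

lemma dec_inj: assumes "m < 128" "n < 128" "dec m = dec n" shows "m = n"
proof (rule bit_eqI)
  fix k
  show "bit m k = bit n k"
  proof (cases "k < 7")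
    case True
    have "dec m $ (Abs_bit1 (int k)) = dec n $ (Abs_bit1 (int k))" using assms(3) by simp
    then show ?thesis using True by (simp add: dec_def ix_Abs split: if_splits)
  next
    case False
    then show ?thesis using bit_big assms(1,2) by simp
  qed
qed

lemma UNIV_bit: "(UNIV :: bit set) = {0, 1}"
  using bit_not_zero_iff by blast

lemma card_bit: "CARD(bit) = 2"
  by (simp add: UNIV_bit)

lemma dec_surj: "\<exists>m<128. dec m = x"
proof -
  have inj: "inj_on dec {..<128}" using dec_inj by (auto simp: inj_on_def)
  have "card (dec ` {..<128}) = 128" using card_image[OF inj] by simp
  also have "\<dots> = CARD(bit ^ 7)" by (simp add: card_bit)
  finally have c: "card (dec ` {..<128}) = CARD(bit ^ 7)" .
  have "CARD(bit ^ 7) = 128" by (simp add: card_bit)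
  then have "finite (UNIV :: (bit^7) set)" by (intro card_ge_0_finite) simp
  then have "dec ` {..<128} = UNIV" using c by (intro card_subset_eq) auto
  then show ?thesis by (metis UNIV_I imageE lessThan_iff)
qed

lemma bit_cases2: "(k::bit) = 0 \<or> k = 1"
  by (cases k) simp_all

lemma span1: "vec.span {u::bit^'n} \<subseteq> {0, u}"
proof
  fix x assume "x \<in> vec.span {u}"
  then obtain k where "x = k *s u" by (auto simp: vec.span_singleton)
  then show "x \<in> {0, u}" using bit_cases2[of k] by auto
qed

lemma span2: "vec.span {u::bit^'n, v} \<subseteq> {0, u, v, u + v}"
proof
  fix x assume "x \<in> vec.span {u, v}"
  then obtain k where k: "x - k *s u \<in> vec.span {v}" by (auto simp: vec.span_insert)
  then have "x - k *s u \<in> {0, v}" using span1 by blast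
  then show "x \<in> {0, u, v, u + v}" using bit_cases2[of k]
    by (auto simp: algebra_simps)
qed

lemma indep3:
  fixes u v w :: "bit^'n"
  assumes "v \<noteq> 0" "u \<notin> {0, v}" "w \<notin> {0, u, v, u + v}"
  shows "vec.independent {w, u, v}"
proof -
  have i1: "vec.independent {v}" using assms(1) by (simp add: vec.independent_insert)
  have "u \<notin> vec.span {v}" using span1[of v] assms(2) by blast
  then have i2: "vec.independent {u, v}" using i1 assms(2) by (simp add: vec.independent_insert)
  have "w \<notin> vec.span {u, v}" using span2[of u v] assms(3) by blast
  then show ?thesis using i2 assms(3) by (simp add: vec.independent_insert)
qed

fun spanof :: "nat \<times> nat \<times> nat \<Rightarrow> (bit^7) set" where
  "spanof (a,b,c) = vec.span {dec c, dec b, dec a}"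

lemma blk_mem:
  assumes "m \<in> set (blk (a,b,c))"
  shows "dec m \<in> spanof (a,b,c)"
proof -
  have A: "dec a \<in> spanof (a,b,c)" "dec b \<in> spanof (a,b,c)" "dec c \<in> spanof (a,b,c)"
    by (simp_all add: vec.span_base)
  have Z: "dec 0 \<in> spanof (a,b,c)" unfolding dec_0 spanof.simps by (rule vec.span_zero)
  have S: "\<And>p q. dec p \<in> spanof (a,b,c) \<Longrightarrow> dec q \<in> spanof (a,b,c) \<Longrightarrow> dec (xor p q) \<in> spanof (a,b,c)"
    unfolding dec_xor spanof.simps by (rule vec.span_add)
  have "m = 0 \<or> m = a \<or> m = b \<or> m = c \<or> m = xor a b \<or> m = xor a c \<or> m = xor b c \<or> m = xor (xor a b) c"
    using assms unfolding blk.simps list.set insert_iff empty_iff by blast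
  then show ?thesis using A Z S[OF A(1) A(2)] S[OF A(1) A(3)] S[OF A(2) A(3)] S[OF S[OF A(1) A(2)] A(3)]
    by (elim disjE) (simp_all only:)
qed

lemma blk_dim:
  assumes "distinct (blk (a,b,c))" "list_all (\<lambda>p. p < 128) (blk (a,b,c))"
  shows "vec.dim (spanof (a,b,c)) = 3"
proof -
  have lt: "a < 128" "b < 128" "c < 128" "xor a b < 128" using assms(2) by simp_all
  have d: "0 \<noteq> a" "0 \<noteq> b" "0 \<noteq> c" "a \<noteq> b" "a \<noteq> c" "b \<noteq> c" "c \<noteq> xor a b" using assms(1) by simp_all
  have ne: "\<And>p q. p < 128 \<Longrightarrow> q < 128 \<Longrightarrow> p \<noteq> q \<Longrightarrow> dec p \<noteq> dec q" using dec_inj by blast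
  have "dec a \<noteq> 0" using ne[of 0 a] lt d by (simp add: dec_0)
  moreover have "dec b \<notin> {0, dec a}" using ne[of 0 b] ne[of a b] lt d by (simp add: dec_0)
  moreover have "dec c \<notin> {0, dec b, dec a, dec b + dec a}"
    using ne[of 0 c] ne[of a c] ne[of b c] ne[of c "xor a b"] lt d by (simp add: dec_0 dec_xor add.commute)
  ultimately have ind: "vec.independent {dec c, dec b, dec a}" by (rule indep3)
  have "card {dec c, dec b, dec a} = 3"
    using ne[of a b] ne[of a c] ne[of b c] lt d by simp
  then show ?thesis using vec.dim_span_eq_card_independent[OF ind] by simp
qed

lemma okp_span:
  assumes "j < 396"
  shows "vec.subspace (spanof (tr j)) \<and> vec.dim (spanof (tr j)) = 3"
proof -
  obtain a b c where t: "tr j = (a,b,c)" by (cases "tr j") auto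
  have "okp j" using okp_all assms .
  then have "distinct (blk (a,b,c))" "list_all (\<lambda>p. p < 128) (blk (a,b,c))"
    using t unfolding okp_def by metis+
  then have "vec.dim (spanof (a,b,c)) = 3" by (rule blk_dim)
  moreover have "vec.subspace (spanof (a,b,c))" unfolding spanof.simps by (rule vec.subspace_span)
  ultimately show ?thesis using t by simp
qed

lemma zero_in: "j < 396 \<Longrightarrow> 0 \<in> set (pl j)"
proof -
  assume "j < 396"
  then have "okp j" by (rule okp_all)
  then show ?thesis by (cases "tr j") (simp add: okp_def)
qed

lemma some_block: assumes "0 < p" "p < 128" shows "\<exists>j. cw p p j"
proof (cases "p < 127")
  case True
  then obtain j where "cw p 127 j" using C1[of p 127] assms True by auto
  then have "cw p p j" unfolding cw_def by blast
  then show ?thesis by blast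
next
  case False
  then have "p = 127" using assms by simp
  then obtain j where "cw 1 127 j" using C1[of 1 127] by auto
  then have "cw p p j" using \<open>p = 127\<close> unfolding cw_def by blast
  then show ?thesis by blast
qed

lemma core: assumes "m < 128" "n < 128" shows "\<exists>j. cw m n j"
proof -
  have sym: "\<And>m n j. cw m n j \<Longrightarrow> cw n m j" by (auto simp: cw_def)
  have z: "\<And>p j. cw p p j \<Longrightarrow> cw 0 p j \<and> cw p 0 j" using zero_in by (auto simp: cw_def)
  show ?thesis
  proof (cases "m = 0 \<or> n = 0 \<or> m = n")
    case True
    show ?thesis
    proof (cases "m = 0 \<and> n = 0")
      case True
      then show ?thesis using zero_in[of 0] by (auto simp: cw_def intro!: exI[of _ 0])
    next
      case False
      then obtain p where p: "0 < p" "p < 128" "(m = 0 \<and> n = p) \<or> (n = 0 \<and> m = p) \<or> (m = p \<and> n = p)"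
        using \<open>m = 0 \<or> n = 0 \<or> m = n\<close> assms by auto
      then obtain j where "cw p p j" using some_block by blast
      then show ?thesis using z p by blast
    qed
  next
    case False
    then have mn: "0 < m" "0 < n" "m \<noteq> n" by auto
    show ?thesis
    proof (cases "m < n")
      case True
      then show ?thesis using C1[of m n] mn assms by blast
    next
      case False
      then have "n < m" using mn by simp
      then obtain j where "cw n m j" using C1[of n m] mn assms by blast
      then show ?thesis using sym by blast
    qed
  qed
qed

theorem mainTheorem9:
  shows "covering_number TYPE(bit) TYPE(7) 3 2 \<le> 396"
proof -
  define F where "F = spanof ` tr ` {..<396}"
  have fin: "finite F" unfolding F_def by simp
  have card: "card F \<le> 396"
  proof -
    have "card F \<le> card (tr ` {..<396})" unfolding F_def by (rule card_image_le) simp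
    also have "\<dots> \<le> card {..<396::nat}" by (rule card_image_le) simp
    finally show ?thesis by simp
  qed
  have sub: "\<forall>U\<in>F. vec.subspace U \<and> vec.dim U = 3"
    unfolding F_def using okp_span by auto
  have pair: "\<exists>U\<in>F. x \<in> U \<and> y \<in> U" for x y :: "bit^7"
  proof -
    obtain m where m: "m < 128" "dec m = x" using dec_surj by blast
    obtain n where n: "n < 128" "dec n = y" using dec_surj by blast
    obtain j where j: "cw m n j" using core m n by blast
    then have j1: "j < 396" "m \<in> set (pl j)" "n \<in> set (pl j)" by (auto simp: cw_def)
    have "okp j" using okp_all j1(1) .
    obtain a b c where t: "tr j = (a,b,c)" by (cases "tr j") auto
    have pb: "pl j = blk (a,b,c)" using \<open>okp j\<close> t unfolding okp_def by metis
    have hm: "m \<in> set (blk (a,b,c))" using j1(2) unfolding pb .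
    have hn: "n \<in> set (blk (a,b,c))" using j1(3) unfolding pb .
    have "x \<in> spanof (a,b,c)" using blk_mem[OF hm] m(2) by (simp only:)
    moreover have "y \<in> spanof (a,b,c)" using blk_mem[OF hn] n(2) by (simp only:)
    ultimately have "x \<in> spanof (tr j)" "y \<in> spanof (tr j)" using t by (simp_all only:)
    moreover have "spanof (tr j) \<in> F" unfolding F_def using j1(1) by blast
    ultimately show ?thesis by blast
  qed
  have cov: "\<forall>W :: (bit ^ 7) set. vec.subspace W \<and> vec.dim W = 2 \<longrightarrow> (\<exists>U\<in>F. W \<subseteq> U)"
  proof (intro allI impI)
    fix W :: "(bit ^ 7) set"
    assume W: "vec.subspace W \<and> vec.dim W = 2"
    obtain B where B: "B \<subseteq> W" "vec.independent B" "W \<subseteq> vec.span B" "card B = vec.dim W"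
      using vec.basis_exists by blast
    then have "card B = 2" using W by simp
    then obtain x y where xy: "B = {x, y}" by (auto simp: card_2_iff)
    obtain U where U: "U \<in> F" "x \<in> U" "y \<in> U" using pair by blast
    have "vec.subspace U" using sub U(1) by blast
    then have "vec.span B \<subseteq> U" using U xy by (intro vec.span_minimal) auto
    then show "\<exists>U\<in>F. W \<subseteq> U" using B(3) U(1) by blast
  qed
  have "covering_number TYPE(bit) TYPE(7) 3 2 \<le> card F"
    unfolding covering_number_def by (rule Least_le) (use fin sub cov in blast)
  with card show ?thesis by linarith
qed
end
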